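(* For any permutations $\pi,\rho\in S_k$, $$\kappa^\rho_\pi(\mathbf w)=(-1)^{l(\pi)-l(\rho)}\prod_{a<b}\frac{w_b-qw_a}{w_b-w_a}\cdot Z^\rho_\pi(\mathbf w).$$
   Context: $q$ is a fixed parameter. $\kappa^\rho_\pi(\mathbf w)$ are the rational functions with $T_\pi=\sum_\rho\kappa^\rho_\pi(\mathbf w)t_\rho$, where $t_\rho f(w_1,\dots,w_k)=f(w_{\rho(1)},\dots,w_{\rho(k)})$, $T_i=q+\frac{w_{i+1}-qw_i}{w_{i+1}-w_i}(t_{\sigma_i}-1)$ and $T_\pi=T_{i_1}\cdots T_{i_l}$ for a reduced word $\pi=\sigma_{i_1}\cdots\sigma_{i_l}$; $l(\cdot)$ is the length. Weights: for colors $0\le i<j$ (color $0$ = no path), a vertex with incoming bottom $i'$, left $j'$, outgoing top $k'$, right $l'$ has weight $R_z(i',j';k',l')$ with $R_z(i,i;i,i)=1$, $R_z(j,i;j,i)=\frac{q(z-1)}{z-q}$, $R_z(j,i;i,j)=\frac{z(1-q)}{z-q}$, $R_z(i,j;i,j)=\frac{z-1}{z-q}$, $R_z(i,j;j,i)=\frac{1-q}{z-q}$, all others $0$. Partition function $Z^\rho_\pi(\mathbf w)$: on a $k\times k$ grid of vertices with columns $1,\dots,k$ (left to right) of rapidity $w_1,\dots,w_k$ and rows $1,\dots,k$ (bottom to top) of rapidity $w_{\rho(1)},\dots,w_{\rho(k)}$, impose boundary colors: bottom incoming edges all $0$, the left incoming edge of row $i$ has color $\pi(i)$, right outgoing edges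 all $0$, the top outgoing edge of column $j$ has color $j$. $Z^\rho_\pi(\mathbf w)$ is the sum over all colorings of the internal edges by $\{0,1,\dots,k\}$ of the product over vertices of $R_{x/y}$, where $x$ is the row rapidity and $y$ the column rapidity of the vertex. *)

theory Defs
  imports "HOL-Combinatorics.Permutations" "HOL-Combinatorics.Transposition"
begin

(* Permutations of {1..k} are functions nat => nat with  p permutes {1..k}.
   Points w = (w_1,...,w_k) are functions  w :: nat => 'a  (only w 1 .. w k matter). *)

definition perms :: "nat \<Rightarrow> (nat \<Rightarrow> nat) set" where
  "perms k = {p. p permutes {1..k}}"

definition perm_length :: "nat \<Rightarrow> (nat \<Rightarrow> nat) \<Rightarrow> nat" where
  "perm_length k p = card {(i, j). i \<in> {1..k} \<and> j \<in> {1..k} \<and> i < j \<and> p j < p i}"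

definition sigma :: "nat \<Rightarrow> nat \<Rightarrow> nat" where
  "sigma i = transpose i (Suc i)"

definition reduced_word :: "nat \<Rightarrow> (nat \<Rightarrow> nat) \<Rightarrow> nat list \<Rightarrow> bool" where
  "reduced_word k p is \<longleftrightarrow> (\<forall>i\<in>set is. 1 \<le> i \<and> i < k)
      \<and> foldr (\<lambda>i f. sigma i \<circ> f) is id = p
      \<and> length is = perm_length k p"

(* Elements  sum_rho c_rho(w) t_rho  of the algebra generated by multiplication operators
   (functions of w) and the permutation operators t_rho, with
   (t_rho f)(w_1,...,w_k) = f(w_{rho 1},...,w_{rho k}).  Such an element is represented by
   its coefficient map  rho |-> c_rho.  Since t_s t_r = t_(s o r) and t_s c = c(w o s) t_s,
   the product is as follows. *)
type_synonym 'a op = "(nat \<Rightarrow> nat) \<Rightarrow> (nat \<Rightarrow> 'a) \<Rightarrow> 'a"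

definition op_mult :: "nat \<Rightarrow> 'a::field op \<Rightarrow> 'a op \<Rightarrow> 'a op" where
  "op_mult k A B = (\<lambda>tau w. \<Sum>s\<in>perms k. A s w * B (inv s \<circ> tau) (w \<circ> s))"

definition op_one :: "'a::field op" where
  "op_one = (\<lambda>tau w. if tau = id then 1 else 0)"

(* T_i = q + (w_{i+1} - q w_i)/(w_{i+1} - w_i) (t_{sigma_i} - 1) *)
definition T_gen :: "'a::field \<Rightarrow> nat \<Rightarrow> 'a op" where
  "T_gen q i = (\<lambda>tau w. let c = (w (Suc i) - q * w i) / (w (Suc i) - w i) in
      (if tau = id then q - c else 0) + (if tau = sigma i then c else 0))"

definition T_word :: "'a::field \<Rightarrow> nat \<Rightarrow> nat list \<Rightarrow> 'a op" where
  "T_word q k is = foldr (\<lambda>i A. op_mult k (T_gen q i) A) is op_one"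

(* T_pi via (a chosen) reduced word; kappa^rho_pi(w) its coefficient at t_rho *)
definition T_perm :: "'a::field \<Rightarrow> nat \<Rightarrow> (nat \<Rightarrow> nat) \<Rightarrow> 'a op" where
  "T_perm q k p = T_word q k (SOME is. reduced_word k p is)"

definition kappa :: "'a::field \<Rightarrow> nat \<Rightarrow> (nat \<Rightarrow> nat) \<Rightarrow> (nat \<Rightarrow> nat) \<Rightarrow> (nat \<Rightarrow> 'a) \<Rightarrow> 'a" where
  "kappa q k p rho w = T_perm q k p rho w"

(* vertex weight R_z(bottom, left; top, right) *)
definition Rw :: "'a::field \<Rightarrow> 'a \<Rightarrow> nat \<Rightarrow> nat \<Rightarrow> nat \<Rightarrow> nat \<Rightarrow> 'a" where
  "Rw q z a b c d =
     (if a = b \<and> c = a \<and> d = a then 1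
      else if b < a \<and> c = a \<and> d = b then q * (z - 1) / (z - q)
      else if b < a \<and> c = b \<and> d = a then z * (1 - q) / (z - q)
      else if a < b \<and> c = a \<and> d = b then (z - 1) / (z - q)
      else if a < b \<and> c = b \<and> d = a then (1 - q) / (z - q)
      else 0)"

(* colour of horizontal edge to the right of vertex (r,c) (c = 0: left boundary of row r),
   given internal horizontal colouring h on {1..k} x {1..k-1} *)
definition hcol :: "nat \<Rightarrow> (nat \<Rightarrow> nat) \<Rightarrow> (nat \<times> nat \<Rightarrow> nat) \<Rightarrow> nat \<Rightarrow> nat \<Rightarrow> nat" where
  "hcol k p h r c = (if c = 0 then p r else if c = k then 0 else h (r, c))"

(* colour of vertical edge above vertex (r,c) (r = 0: bottom boundary of column c),
   given internal vertical colouring v on {1..k-1} x {1..k} *)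
definition vcol :: "nat \<Rightarrow> (nat \<times> nat \<Rightarrow> nat) \<Rightarrow> nat \<Rightarrow> nat \<Rightarrow> nat" where
  "vcol k v r c = (if r = 0 then 0 else if r = k then c else v (r, c))"

definition Zpf :: "'a::field \<Rightarrow> nat \<Rightarrow> (nat \<Rightarrow> nat) \<Rightarrow> (nat \<Rightarrow> nat) \<Rightarrow> (nat \<Rightarrow> 'a) \<Rightarrow> 'a" where
  "Zpf q k p rho w =
    (\<Sum>h\<in>({1..k} \<times> {1..<k}) \<rightarrow>\<^sub>E {0..k}. \<Sum>v\<in>({1..<k} \<times> {1..k}) \<rightarrow>\<^sub>E {0..k}.
      \<Prod>r\<in>{1..k}. \<Prod>c\<in>{1..k}.
        Rw q (w (rho r) / w c) (vcol k v (r - 1) c) (hcol k p h r (c - 1))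
             (vcol k v r c) (hcol k p h r c))"

end

theory Submission
  imports Defs
begin

lemma Rw_nz: "Rw q z a b c d \<noteq> 0 \<Longrightarrow> (c = a \<and> d = b) \<or> (c = b \<and> d = a)"
  unfolding Rw_def by (auto split: if_splits)

lemma sum_two:
  assumes "finite C" "x \<in> C" "y \<in> C" "\<And>d. d \<in> C \<Longrightarrow> d \<noteq> x \<Longrightarrow> d \<noteq> y \<Longrightarrow> g d = 0"
  shows "sum g C = g x + (if x \<noteq> y then g y else 0)"
proof -
  have "sum g C = sum g {x, y}"
    using assms by (intro sum.mono_neutral_right) auto
  then show ?thesis by auto
qed

lemma sum_one:
  assumes "finite C" "x \<in> C" "\<And>d. d \<in> C \<Longrightarrow> d \<noteq> x \<Longrightarrow> g d = 0"
  shows "sum g C = g x"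
  using sum_two[of C x x g] assms by auto

lemma sum_out2:
  assumes "a \<in> C" "b \<in> C" "finite C"
  shows "(\<Sum>c\<in>C. \<Sum>d\<in>C. Rw q z a b c d * f c d) =
     Rw q z a b a b * f a b + (if a \<noteq> b then Rw q z a b b a * f b a else 0)"
proof -
  have i: "(\<Sum>d\<in>C. Rw q z a b c d * f c d) = (if c = a then Rw q z a b c b * f c b else 0) + (if c = b \<and> a \<noteq> b then Rw q z a b c a * f c a else 0)" if "c \<in> C" for c
  proof (cases "c = a")
    case True
    then show ?thesis using assms
      by (subst sum_one[of _ b]) (auto dest: Rw_nz)
  next
    case False
    then show ?thesis using assms
      by (subst sum_one[of _ a]) (auto dest: Rw_nz)
  qed
  show ?thesis
    using assms
    by (simp add: i, subst sum_two[of _ a b]) auto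
qed

lemma sum_in2:
  assumes "u \<in> C" "u' \<in> C" "finite C"
  shows "(\<Sum>g\<in>C. \<Sum>h\<in>C. f g h * Rw q z g h u' u) =
     f u' u * Rw q z u' u u' u + (if u \<noteq> u' then f u u' * Rw q z u u' u' u else 0)"
proof -
  have i: "(\<Sum>h\<in>C. f g h * Rw q z g h u' u) = (if g = u' then f g u * Rw q z g u u' u else 0) + (if g = u \<and> u \<noteq> u' then f g u' * Rw q z g u' u' u else 0)" if "g \<in> C" for g
  proof (cases "g = u'")
    case True
    then show ?thesis using assms
      by (subst sum_one[of _ u]) (auto dest: Rw_nz)
  next
    case False
    then show ?thesis using assms
      by (subst sum_one[of _ u']) (auto dest: Rw_nz)
  qed
  show ?thesis
    using assms
    by (simp add: i, subst sum_two[of _ u' u]) auto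
qed

lemma sum_top:
  assumes "a \<in> C" "b \<in> C" "finite C"
  shows "(\<Sum>m\<in>C. Rw q z b a m u * f m) = Rw q z b a (if u = a then b else a) u * f (if u = a then b else a)"
  using assms by (subst sum_one[of _ "if u = a then b else a"]) (auto, metis Rw_nz)

lemma sum_right:
  assumes "a \<in> C" "b \<in> C" "finite C"
  shows "(\<Sum>m\<in>C. Rw q z b a t m * f m) = Rw q z b a t (if t = b then a else b) * f (if t = b then a else b)"
  using assms by (subst sum_one[of _ "if t = b then a else b"]) (auto, metis Rw_nz)

lemma sum_bot:
  assumes "t \<in> C" "h \<in> C" "finite C"
  shows "(\<Sum>m\<in>C. Rw q z m b t h * f m) = Rw q z (if h = b then t else h) b t h * f (if h = b then t else h)"
  using assms by (subst sum_one[of _ "if h = b then t else h"]) (auto, metis Rw_nz)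

lemma ybe_red:
  fixes q zR zX zY :: "'a::field"
  assumes "finite C" "a \<in> C" "b \<in> C" "b0 \<in> C" "t0 \<in> C" "u \<in> C" "u' \<in> C"
  shows "(\<Sum>c\<in>C. \<Sum>d\<in>C. \<Sum>m\<in>C. Rw q zR a b c d * (Rw q zX b0 d m u * Rw q zY m c t0 u')) =
     Rw q zR a b a b * (Rw q zX b0 b (if u = b then b0 else b) u * Rw q zY (if u = b then b0 else b) a t0 u')
   + (if a \<noteq> b then Rw q zR a b b a * (Rw q zX b0 a (if u = a then b0 else a) u * Rw q zY (if u = a then b0 else a) b t0 u') else 0)"
proof -
  let ?F = "\<lambda>c d. Rw q zX b0 d (if u = d then b0 else d) u * Rw q zY (if u = d then b0 else d) c t0 u'"
  have "(\<Sum>c\<in>C. \<Sum>d\<in>C. \<Sum>m\<in>C. Rw q zR a b c d * (Rw q zX b0 d m u * Rw q zY m c t0 u')) =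
        (\<Sum>c\<in>C. \<Sum>d\<in>C. Rw q zR a b c d * ?F c d)"
  proof (intro sum.cong refl)
    fix c d assume "c \<in> C" "d \<in> C"
    have "(\<Sum>m\<in>C. Rw q zR a b c d * (Rw q zX b0 d m u * Rw q zY m c t0 u')) = Rw q zR a b c d * (\<Sum>m\<in>C. Rw q zX b0 d m u * Rw q zY m c t0 u')"
      by (simp add: sum_distrib_left)
    also have "(\<Sum>m\<in>C. Rw q zX b0 d m u * Rw q zY m c t0 u') = ?F c d"
      using sum_top[of d C b0 q zX u "\<lambda>m. Rw q zY m c t0 u'"] assms \<open>d \<in> C\<close> by simp
    finally show "(\<Sum>m\<in>C. Rw q zR a b c d * (Rw q zX b0 d m u * Rw q zY m c t0 u')) = Rw q zR a b c d * ?F c d" .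
  qed
  also have "\<dots> = Rw q zR a b a b * ?F a b + (if a \<noteq> b then Rw q zR a b b a * ?F b a else 0)"
    using sum_out2[of a C b q zR ?F] assms by simp
  finally show ?thesis by simp
qed

lemma ybe_red2:
  fixes q zR zX zY :: "'a::field"
  assumes "finite C" "a \<in> C" "b \<in> C" "b0 \<in> C" "t0 \<in> C" "u \<in> C" "u' \<in> C"
  shows "(\<Sum>g\<in>C. \<Sum>h\<in>C. (\<Sum>m\<in>C. Rw q zY b0 a m g * Rw q zX m b t0 h) * Rw q zR g h u' u) =
     (Rw q zY b0 a (if u' = a then b0 else a) u' * Rw q zX (if u' = a then b0 else a) b t0 u) * Rw q zR u' u u' u
   + (if u \<noteq> u' then (Rw q zY b0 a (if u = a then b0 else a) u * Rw q zX (if u = a then b0 else a) b t0 u') * Rw q zR u u' u' u else 0)"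
proof -
  let ?F = "\<lambda>g h. Rw q zY b0 a (if g = a then b0 else a) g * Rw q zX (if g = a then b0 else a) b t0 h"
  have "(\<Sum>g\<in>C. \<Sum>h\<in>C. (\<Sum>m\<in>C. Rw q zY b0 a m g * Rw q zX m b t0 h) * Rw q zR g h u' u) =
        (\<Sum>g\<in>C. \<Sum>h\<in>C. ?F g h * Rw q zR g h u' u)"
  proof (intro sum.cong refl)
    fix g h assume "g \<in> C" "h \<in> C"
    show "(\<Sum>m\<in>C. Rw q zY b0 a m g * Rw q zX m b t0 h) * Rw q zR g h u' u = ?F g h * Rw q zR g h u' u"
      using sum_top[of a C b0 q zY g "\<lambda>m. Rw q zX m b t0 h"] assms by simp
  qed
  also have "\<dots> = ?F u' u * Rw q zR u' u u' u + (if u \<noteq> u' then ?F u u' * Rw q zR u u' u' u else 0)"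
    using sum_in2[of u C u' ?F q zR] assms by simp
  finally show ?thesis by simp
qed

definition Rn :: "'a::field \<Rightarrow> 'a \<Rightarrow> nat \<Rightarrow> nat \<Rightarrow> nat \<Rightarrow> nat \<Rightarrow> 'a" where
  "Rn q z a b c d =
     (if a = b \<and> c = a \<and> d = a then z - q
      else if b < a \<and> c = a \<and> d = b then q * (z - 1)
      else if b < a \<and> c = b \<and> d = a then z * (1 - q)
      else if a < b \<and> c = a \<and> d = b then (z - 1)
      else if a < b \<and> c = b \<and> d = a then (1 - q)
      else 0)"

lemma Rw_Rn: "z - q \<noteq> 0 \<Longrightarrow> Rw q z a b c d = Rn q z a b c d / (z - q)"
  unfolding Rw_def Rn_def by auto

lemma Rn_nz: "Rn q z a b c d \<noteq> 0 \<Longrightarrow> (c = a \<and> d = b) \<or> (c = b \<and> d = a)"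
  unfolding Rn_def by (auto split: if_splits)

lemma L1: "(A/d1) * ((B/d2) * (C/d3)) = (A*B*C) / (d1*d2*d3)" for A B C d1 d2 d3 :: "'a::field"
  by (simp add: mult.assoc)
lemma L2: "((C/d3) * (B/d2)) * (A/d1) = (A*B*C) / (d1*d2*d3)" for A B C d1 d2 d3 :: "'a::field"
  by (simp add: ac_simps)
lemma if_div: "(if P then X / D else 0) = (if P then X else 0) / D" for X D :: "'a::field"
  by simp

lemma ybe_core_num:
  fixes q z1 z3 :: "'a::field"
  shows "Rn q z1 a b a b * Rn q (z1*z3) b0 b (if u = b then b0 else b) u * Rn q z3 (if u = b then b0 else b) a t0 u'
   + (if a \<noteq> b then Rn q z1 a b b a * Rn q (z1*z3) b0 a (if u = a then b0 else a) u * Rn q z3 (if u = a then b0 else a) b t0 u' else 0)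
   = Rn q z1 u' u u' u * Rn q (z1*z3) (if u' = a then b0 else a) b t0 u * Rn q z3 b0 a (if u' = a then b0 else a) u'
   + (if u \<noteq> u' then Rn q z1 u u' u' u * Rn q (z1*z3) (if u = a then b0 else a) b t0 u' * Rn q z3 b0 a (if u = a then b0 else a) u else 0)"
proof (cases "(u=a \<and> u'=b \<and> t0=b0) \<or> (u=a \<and> u'=b0 \<and> t0=b) \<or> (u=b \<and> u'=a \<and> t0=b0) \<or>
                (u=b \<and> u'=b0 \<and> t0=a) \<or> (u=b0 \<and> u'=a \<and> t0=b) \<or> (u=b0 \<and> u'=b \<and> t0=a)")
  case True
  then show ?thesis
    by (elim disjE conjE; (cases a b rule: linorder_cases; cases a b0 rule: linorder_cases; cases b b0 rule: linorder_cases);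
        simp add: Rn_def algebra_simps)
next
  case False
  have "Rn q (z1*z3) b0 b (if u = b then b0 else b) u * Rn q z3 (if u = b then b0 else b) a t0 u' = 0"
  proof (rule ccontr)
    assume "\<not> ?thesis"
    then have "Rn q (z1*z3) b0 b (if u = b then b0 else b) u \<noteq> 0" "Rn q z3 (if u = b then b0 else b) a t0 u' \<noteq> 0" by auto
    from Rn_nz[OF this(1)] Rn_nz[OF this(2)] False show False by (auto split: if_splits)
  qed
  moreover have "Rn q (z1*z3) b0 a (if u = a then b0 else a) u * Rn q z3 (if u = a then b0 else a) b t0 u' = 0"
  proof (rule ccontr)
    assume "\<not> ?thesis"
    then have "Rn q (z1*z3) b0 a (if u = a then b0 else a) u \<noteq> 0" "Rn q z3 (if u = a then b0 else a) b t0 u' \<noteq> 0" by auto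
    from Rn_nz[OF this(1)] Rn_nz[OF this(2)] False show False by (auto split: if_splits)
  qed
  moreover have "Rn q (z1*z3) (if u' = a then b0 else a) b t0 u * Rn q z3 b0 a (if u' = a then b0 else a) u' = 0"
  proof (rule ccontr)
    assume "\<not> ?thesis"
    then have "Rn q (z1*z3) (if u' = a then b0 else a) b t0 u \<noteq> 0" "Rn q z3 b0 a (if u' = a then b0 else a) u' \<noteq> 0" by auto
    from Rn_nz[OF this(1)] Rn_nz[OF this(2)] False show False by (auto split: if_splits)
  qed
  moreover have "Rn q (z1*z3) (if u = a then b0 else a) b t0 u' * Rn q z3 b0 a (if u = a then b0 else a) u = 0"
  proof (rule ccontr)
    assume "\<not> ?thesis"
    then have "Rn q (z1*z3) (if u = a then b0 else a) b t0 u' \<noteq> 0" "Rn q z3 b0 a (if u = a then b0 else a) u \<noteq> 0" by auto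
    from Rn_nz[OF this(1)] Rn_nz[OF this(2)] False show False by (auto split: if_splits)
  qed
  ultimately show ?thesis by (simp only: mult.assoc mult_zero_right add_0_right if_cancel)
qed


lemma ybe_local:
  fixes q z1 z3 :: "'a::field"
  assumes C: "finite C" "a \<in> C" "b \<in> C" "b0 \<in> C" "t0 \<in> C" "u \<in> C" "u' \<in> C"
    and nz: "z1 - q \<noteq> 0" "z1 * z3 - q \<noteq> 0" "z3 - q \<noteq> 0"
  shows "(\<Sum>c\<in>C. \<Sum>d\<in>C. \<Sum>m\<in>C. Rw q z1 a b c d * (Rw q (z1*z3) b0 d m u * Rw q z3 m c t0 u')) =
         (\<Sum>g\<in>C. \<Sum>h\<in>C. (\<Sum>m\<in>C. Rw q z3 b0 a m g * Rw q (z1*z3) m b t0 h) * Rw q z1 g h u' u)"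
proof -
  have "(\<Sum>c\<in>C. \<Sum>d\<in>C. \<Sum>m\<in>C. Rw q z1 a b c d * (Rw q (z1*z3) b0 d m u * Rw q z3 m c t0 u')) =
     Rw q z1 a b a b * (Rw q (z1*z3) b0 b (if u = b then b0 else b) u * Rw q z3 (if u = b then b0 else b) a t0 u')
   + (if a \<noteq> b then Rw q z1 a b b a * (Rw q (z1*z3) b0 a (if u = a then b0 else a) u * Rw q z3 (if u = a then b0 else a) b t0 u') else 0)"
    by (rule ybe_red[OF C])
  also have "\<dots> = (Rn q z1 a b a b * Rn q (z1*z3) b0 b (if u = b then b0 else b) u * Rn q z3 (if u = b then b0 else b) a t0 u'
   + (if a \<noteq> b then Rn q z1 a b b a * Rn q (z1*z3) b0 a (if u = a then b0 else a) u * Rn q z3 (if u = a then b0 else a) b t0 u' else 0))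
     / ((z1 - q) * (z1 * z3 - q) * (z3 - q))"
    by (simp only: Rw_Rn nz L1 if_div add_divide_distrib not_False_eq_True)
  also have "\<dots> = (Rn q z1 u' u u' u * Rn q (z1*z3) (if u' = a then b0 else a) b t0 u * Rn q z3 b0 a (if u' = a then b0 else a) u'
   + (if u \<noteq> u' then Rn q z1 u u' u' u * Rn q (z1*z3) (if u = a then b0 else a) b t0 u' * Rn q z3 b0 a (if u = a then b0 else a) u else 0))
     / ((z1 - q) * (z1 * z3 - q) * (z3 - q))"
    by (simp only: ybe_core_num)
  also have "\<dots> = (Rw q z3 b0 a (if u' = a then b0 else a) u' * Rw q (z1*z3) (if u' = a then b0 else a) b t0 u) * Rw q z1 u' u u' u
   + (if u \<noteq> u' then (Rw q z3 b0 a (if u = a then b0 else a) u * Rw q (z1*z3) (if u = a then b0 else a) b t0 u') * Rw q z1 u u' u' u else 0)"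
    by (simp only: Rw_Rn nz L2 if_div add_divide_distrib not_False_eq_True)
  also have "\<dots> = (\<Sum>g\<in>C. \<Sum>h\<in>C. (\<Sum>m\<in>C. Rw q z3 b0 a m g * Rw q (z1*z3) m b t0 h) * Rw q z1 g h u' u)"
    by (rule ybe_red2[OF C, symmetric])
  finally show ?thesis .
qed

definition invs :: "nat \<Rightarrow> (nat \<Rightarrow> nat) \<Rightarrow> (nat \<times> nat) set" where
  "invs k g = {(i, j). i \<in> {1..k} \<and> j \<in> {1..k} \<and> i < j \<and> g j < g i}"

lemma perm_length_invs: "perm_length k g = card (invs k g)"
  unfolding perm_length_def invs_def by simp

lemma finite_invs: "finite (invs k g)"
  by (rule finite_subset[of _ "{1..k} \<times> {1..k}"]) (auto simp: invs_def)

lemma sigma_simps: "sigma j j = Suc j" "sigma j (Suc j) = j" "i \<noteq> j \<Longrightarrow> i \<noteq> Suc j \<Longrightarrow> sigma j i = i"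
  by (auto simp: sigma_def transpose_def)

lemma sigma_invol[simp]: "sigma j (sigma j i) = i"
  by (auto simp: sigma_def transpose_def)

lemma sigma_o_sigma[simp]: "sigma j \<circ> sigma j = id"
  by (auto simp: fun_eq_iff)

lemma sigma_order: "i < i' \<Longrightarrow> (i, i') \<noteq> (j, Suc j) \<Longrightarrow> sigma j i < sigma j i'"
  by (auto simp: sigma_def transpose_def)

lemma sigma_range: "1 \<le> j \<Longrightarrow> j < k \<Longrightarrow> i \<in> {1..k} \<Longrightarrow> sigma j i \<in> {1..k}"
  by (auto simp: sigma_def transpose_def)

lemma sigma_permutes: "1 \<le> j \<Longrightarrow> j < k \<Longrightarrow> sigma j permutes {1..k}"
  unfolding sigma_def by (rule permutes_swap_id) auto

lemma len_up:
  assumes "1 \<le> j" "j < k" "g j < g (Suc j)"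
  shows "perm_length k (g \<circ> sigma j) = Suc (perm_length k g)"
proof -
  define psi where "psi = (\<lambda>(i::nat, i'::nat). (sigma j i, sigma j i'))"
  have p0: "(j, Suc j) \<notin> invs k g" using assms(3) by (auto simp: invs_def)
  have eq: "invs k (g \<circ> sigma j) = insert (j, Suc j) (psi ` invs k g)"
  proof (intro equalityI subsetI)
    fix x assume x: "x \<in> invs k (g \<circ> sigma j)"
    obtain i i' where xi: "x = (i, i')" by force
    show "x \<in> insert (j, Suc j) (psi ` invs k g)"
    proof (cases "x = (j, Suc j)")
      case False
      have "(sigma j i, sigma j i') \<in> invs k g"
        using x xi False sigma_order[of i i' j] sigma_range[OF assms(1,2)] by (auto simp: invs_def)
      moreover have "psi (sigma j i, sigma j i') = x" by (simp add: psi_def xi)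
      ultimately show ?thesis by force
    qed simp
  next
    fix x assume x: "x \<in> insert (j, Suc j) (psi ` invs k g)"
    show "x \<in> invs k (g \<circ> sigma j)"
    proof (cases "x = (j, Suc j)")
      case True
      then show ?thesis using assms by (auto simp: invs_def sigma_simps)
    next
      case False
      then obtain i i' where ii: "(i, i') \<in> invs k g" "x = (sigma j i, sigma j i')"
        using x by (auto simp: psi_def)
      have "(i, i') \<noteq> (j, Suc j)" using ii p0 by auto
      then show ?thesis using ii sigma_order[of i i' j] sigma_range[OF assms(1,2)] by (auto simp: invs_def)
    qed
  qed
  have inj: "inj psi"
    by (rule injI) (auto simp: psi_def, metis sigma_invol, metis sigma_invol)
  have nin: "(j, Suc j) \<notin> psi ` invs k g"
  proof
    assume "(j, Suc j) \<in> psi ` invs k g"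
    then obtain i i' where "(i, i') \<in> invs k g" "sigma j i = j" "sigma j i' = Suc j"
      by (auto simp: psi_def)
    then have "i = Suc j" "i' = j" by (metis sigma_invol sigma_simps(1,2))+
    with \<open>(i, i') \<in> invs k g\<close> show False by (auto simp: invs_def)
  qed
  show ?thesis
    unfolding perm_length_invs eq
    using nin finite_invs by (simp add: card_image inj_on_subset[OF inj])
qed

lemma len_down:
  assumes "1 \<le> j" "j < k" "g (Suc j) < g j"
  shows "Suc (perm_length k (g \<circ> sigma j)) = perm_length k g"
proof -
  have "perm_length k ((g \<circ> sigma j) \<circ> sigma j) = Suc (perm_length k (g \<circ> sigma j))"
    using assms by (intro len_up) (auto simp: sigma_simps)
  then show ?thesis by (simp add: o_assoc[symmetric])
qed

lemma len_step:
  assumes "g permutes {1..k}" "1 \<le> j" "j < k"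
  shows "perm_length k (g \<circ> sigma j) = Suc (perm_length k g) \<and> g j < g (Suc j) \<or>
         Suc (perm_length k (g \<circ> sigma j)) = perm_length k g \<and> g (Suc j) < g j"
proof -
  have "g j \<noteq> g (Suc j)" using assms permutes_inj[OF assms(1)] by (metis injD n_not_Suc_n)
  then show ?thesis using len_up[OF assms(2,3)] len_down[OF assms(2,3)] by (cases "g j < g (Suc j)") auto
qed

lemma perm_length_id[simp]: "perm_length k id = 0"
proof -
  have e: "{(i, j). i \<in> {1..k} \<and> j \<in> {1..k} \<and> i < j \<and> id j < id i} = {}" by auto
  show ?thesis unfolding perm_length_def e by simp
qed

definition fw :: "nat list \<Rightarrow> nat \<Rightarrow> nat" where
  "fw ws = foldr (\<lambda>i f. sigma i \<circ> f) ws id"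

lemma foldr_sig: "foldr (\<lambda>i f. sigma i \<circ> f) ws g = fw ws \<circ> g"
  unfolding fw_def by (induction ws) (auto simp: o_assoc)

lemma fw_snoc: "fw (ws @ [j]) = fw ws \<circ> sigma j"
  using foldr_sig[of ws "sigma j"] by (simp add: fw_def)

lemma fw_permutes: "\<forall>i\<in>set ws. 1 \<le> i \<and> i < k \<Longrightarrow> fw ws permutes {1..k}"
proof (induction ws rule: rev_induct)
  case Nil
  then show ?case using permutes_id[of "{1..k}"] by (simp add: fw_def id_def)
next
  case (snoc x xs)
  then have "1 \<le> x" "x < k" "fw xs permutes {1..k}" by auto
  then show ?case unfolding fw_snoc by (intro permutes_compose sigma_permutes)
qed

lemma len_le: "\<forall>i\<in>set ws. 1 \<le> i \<and> i < k \<Longrightarrow> perm_length k (fw ws) \<le> length ws"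
proof (induction ws rule: rev_induct)
  case Nil
  then show ?case by (simp add: fw_def perm_length_id[unfolded id_def])
next
  case (snoc x xs)
  then have "fw xs permutes {1..k}" "1 \<le> x" "x < k" using fw_permutes[of xs k] by auto
  from len_step[OF this] have "perm_length k (fw xs \<circ> sigma x) \<le> Suc (perm_length k (fw xs))"
    by (elim disjE conjE) simp_all
  moreover have "perm_length k (fw xs) \<le> length xs" using snoc by auto
  ultimately show ?case unfolding fw_snoc length_append_singleton by linarith
qed

lemma reduced_word_alt: "reduced_word k p ws \<longleftrightarrow> (\<forall>i\<in>set ws. 1 \<le> i \<and> i < k) \<and> fw ws = p \<and> length ws = perm_length k p"
  unfolding reduced_word_def fw_def by simp

lemma reduced_snoc:
  assumes "reduced_word k p (ws @ [j])"
  shows "reduced_word k (p \<circ> sigma j) ws" "p = (p \<circ> sigma j) \<circ> sigma j"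
        "perm_length k p = Suc (perm_length k (p \<circ> sigma j))"
        "(p \<circ> sigma j) j < (p \<circ> sigma j) (Suc j)" "1 \<le> j" "j < k"
proof -
  have A: "\<forall>i\<in>set ws. 1 \<le> i \<and> i < k" "fw ws \<circ> sigma j = p" "Suc (length ws) = perm_length k p" "1 \<le> j" "j < k"
    using assms by (auto simp: reduced_word_alt fw_snoc)
  have g: "fw ws = p \<circ> sigma j" using A(2) by (auto simp: o_assoc[symmetric])
  have le: "perm_length k (fw ws) \<le> length ws" using len_le[OF A(1)] .
  have perm: "fw ws permutes {1..k}" using fw_permutes[OF A(1)] .
  from len_step[OF perm A(4,5)] le A(2,3)
  have "perm_length k (fw ws) = length ws \<and> fw ws j < fw ws (Suc j)" by auto
  then show "reduced_word k (p \<circ> sigma j) ws" "perm_length k p = Suc (perm_length k (p \<circ> sigma j))"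
     "(p \<circ> sigma j) j < (p \<circ> sigma j) (Suc j)"
    using A g by (auto simp: reduced_word_alt)
  show "p = (p \<circ> sigma j) \<circ> sigma j" by (simp add: o_assoc[symmetric])
  show "1 \<le> j" "j < k" using A by auto
qed

lemma mono_perm_id:
  assumes "g permutes {1..k}" "\<forall>j. 1 \<le> j \<and> j < k \<longrightarrow> g j < g (Suc j)"
  shows "g = id"
proof -
  have range: "i \<in> {1..k} \<Longrightarrow> g i \<in> {1..k}" for i using permutes_in_image[OF assms(1)] by blast
  have ge: "i \<in> {1..k} \<Longrightarrow> i \<le> g i" for i
  proof (induction i)
    case 0 then show ?case by simp
  next
    case (Suc i)
    show ?case
    proof (cases "i = 0")
      case True then show ?thesis using range[OF Suc.prems] by simp
    next
      case False
      then have "g i < g (Suc i)" using assms(2) Suc.prems by auto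
      then show ?thesis using Suc False by auto
    qed
  qed
  have le: "d < k \<Longrightarrow> g (k - d) \<le> k - d" for d
  proof (induction d)
    case 0 then show ?case using range[of k] by auto
  next
    case (Suc d)
    have "g (k - Suc d) < g (Suc (k - Suc d))" using assms(2) Suc.prems by auto
    moreover have "Suc (k - Suc d) = k - d" using Suc.prems by auto
    ultimately show ?case using Suc by auto
  qed
  have "i \<in> {1..k} \<Longrightarrow> g i = i" for i
    using ge[of i] le[of "k - i"] by auto
  then show ?thesis using permutes_not_in[OF assms(1)] by (auto simp: fun_eq_iff)
qed

lemma ex_reduced: "g permutes {1..k} \<Longrightarrow> \<exists>ws. reduced_word k g ws"
proof (induction "perm_length k g" arbitrary: g rule: less_induct)
  case less
  show ?case
  proof (cases "\<exists>j. 1 \<le> j \<and> j < k \<and> g (Suc j) < g j")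
    case True
    then obtain j where j: "1 \<le> j" "j < k" "g (Suc j) < g j" by auto
    have l: "Suc (perm_length k (g \<circ> sigma j)) = perm_length k g" using len_down[OF j] .
    have "g \<circ> sigma j permutes {1..k}" using less.prems sigma_permutes[OF j(1,2)] by (simp add: permutes_compose)
    with less.hyps[of "g \<circ> sigma j"] l obtain ws where "reduced_word k (g \<circ> sigma j) ws" by auto
    then have "reduced_word k g (ws @ [j])"
      using j l by (auto simp: reduced_word_alt fw_snoc o_assoc[symmetric])
    then show ?thesis by blast
  next
    case False
    have "g j \<noteq> g (Suc j)" if "1 \<le> j" "j < k" for j
      using permutes_inj[OF less.prems] by (metis injD n_not_Suc_n)
    with False have "\<forall>j. 1 \<le> j \<and> j < k \<longrightarrow> g j < g (Suc j)" by (meson linorder_neqE_nat)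
    then have "g = id" using mono_perm_id less.prems by blast
    then have "reduced_word k g []" by (simp add: reduced_word_alt fw_def perm_length_id[unfolded id_def])
    then show ?thesis by blast
  qed
qed

fun rowN :: "'a::field \<Rightarrow> nat \<Rightarrow> (nat \<Rightarrow> 'a) \<Rightarrow> 'a \<Rightarrow> nat \<Rightarrow> (nat \<Rightarrow> nat) \<Rightarrow> (nat \<Rightarrow> nat) \<Rightarrow> nat \<Rightarrow> nat \<Rightarrow> nat \<Rightarrow> 'a" where
  "rowN q K Y x a B A c 0 e = (if a = e then 1 else 0)"
| "rowN q K Y x a B A c (Suc n) e = (\<Sum>m\<in>{0..K}. Rw q (x / Y c) (B c) a (A c) m * rowN q K Y x m B A (Suc c) n e)"

lemma rowN_cong:
  "(\<And>j. c \<le> j \<Longrightarrow> j < c + n \<Longrightarrow> B j = B' j \<and> A j = A' j) \<Longrightarrow> rowN q K Y x a B A c n e = rowN q K Y x a B' A' c n e"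
proof (induction n arbitrary: a c)
  case 0
  then show ?case by simp
next
  case (Suc n)
  have "B c = B' c" "A c = A' c" using Suc.prems[of c] by auto
  moreover have "rowN q K Y x m B A (Suc c) n e = rowN q K Y x m B' A' (Suc c) n e" for m
    using Suc.prems by (intro Suc.IH) auto
  ultimately show ?case by simp
qed

lemma sum_PiE_insert:
  assumes "x \<notin> A" "finite A"
  shows "(\<Sum>g\<in>PiE (insert x A) (\<lambda>_. S). F g) = (\<Sum>y\<in>S. \<Sum>g\<in>PiE A (\<lambda>_. S). F (g(x := y)))"
proof -
  have "(\<Sum>g\<in>PiE (insert x A) (\<lambda>_. S). F g) = (\<Sum>(y,g)\<in>S \<times> PiE A (\<lambda>_. S). F (g(x := y)))"
    using assms
    by (intro sum.reindex_bij_witness[of _ "\<lambda>(y,g). g(x := y)" "\<lambda>g. (g x, g(x := undefined))"])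
       (auto simp: PiE_def extensional_def)
  also have "\<dots> = (\<Sum>y\<in>S. \<Sum>g\<in>PiE A (\<lambda>_. S). F (g(x := y)))"
    by (rule sum.cartesian_product[symmetric])
  finally show ?thesis .
qed

definition DD :: "'a::field \<Rightarrow> nat \<Rightarrow> (nat \<Rightarrow> 'a) \<Rightarrow> 'a \<Rightarrow> 'a \<Rightarrow> nat \<Rightarrow> nat \<Rightarrow> (nat \<Rightarrow> nat) \<Rightarrow> (nat \<Rightarrow> nat) \<Rightarrow> nat \<Rightarrow> nat \<Rightarrow> nat \<Rightarrow> nat \<Rightarrow> 'a" where
  "DD q K Y x y a b B T c n e f = (\<Sum>M\<in>PiE {c..<c+n} (\<lambda>_. {0..K}). rowN q K Y x a B M c n e * rowN q K Y y b M T c n f)"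

lemma DD_0: "DD q K Y x y a b B T c 0 e f = (if a = e then 1 else 0) * (if b = f then 1 else 0)"
  unfolding DD_def by simp

lemma DD_Suc:
  "DD q K Y x y a b B T c (Suc n) e f =
    (\<Sum>u\<in>{0..K}. \<Sum>u'\<in>{0..K}. (\<Sum>m\<in>{0..K}. Rw q (x / Y c) (B c) a m u * Rw q (y / Y c) m b (T c) u') * DD q K Y x y u u' B T (Suc c) n e f)"
proof -
  let ?C = "{0..K}"
  let ?P = "PiE {Suc c..<Suc c + n} (\<lambda>_. ?C)"
  have ins: "{c..<c + Suc n} = insert c {Suc c..<Suc c + n}" by auto
  have r1: "rowN q K Y x a B (M(c := m)) c (Suc n) e = (\<Sum>u\<in>?C. Rw q (x / Y c) (B c) a m u * rowN q K Y x u B M (Suc c) n e)" for M m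
  proof -
    have "rowN q K Y x u B (M(c := m)) (Suc c) n e = rowN q K Y x u B M (Suc c) n e" for u
      by (rule rowN_cong) auto
    then show ?thesis by simp
  qed
  have r2: "rowN q K Y y b (M(c := m)) T c (Suc n) f = (\<Sum>u'\<in>?C. Rw q (y / Y c) m b (T c) u' * rowN q K Y y u' M T (Suc c) n f)" for M m
  proof -
    have "rowN q K Y y u' (M(c := m)) T (Suc c) n f = rowN q K Y y u' M T (Suc c) n f" for u'
      by (rule rowN_cong) auto
    then show ?thesis by simp
  qed
  have "DD q K Y x y a b B T c (Suc n) e f = (\<Sum>m\<in>?C. \<Sum>M\<in>?P. rowN q K Y x a B (M(c := m)) c (Suc n) e * rowN q K Y y b (M(c := m)) T c (Suc n) f)"
    unfolding DD_def ins by (rule sum_PiE_insert) auto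
  also have "\<dots> = (\<Sum>m\<in>?C. \<Sum>M\<in>?P. \<Sum>u\<in>?C. \<Sum>u'\<in>?C. (Rw q (x / Y c) (B c) a m u * Rw q (y / Y c) m b (T c) u') * (rowN q K Y x u B M (Suc c) n e * rowN q K Y y u' M T (Suc c) n f))"
    unfolding r1 r2 by (simp add: sum_product ac_simps)
  also have "\<dots> = (\<Sum>m\<in>?C. \<Sum>u\<in>?C. \<Sum>u'\<in>?C. \<Sum>M\<in>?P. (Rw q (x / Y c) (B c) a m u * Rw q (y / Y c) m b (T c) u') * (rowN q K Y x u B M (Suc c) n e * rowN q K Y y u' M T (Suc c) n f))"
    by (intro sum.cong refl, subst sum.swap, rule sum.cong[OF refl], rule sum.swap)
  also have "\<dots> = (\<Sum>u\<in>?C. \<Sum>u'\<in>?C. \<Sum>m\<in>?C. \<Sum>M\<in>?P. (Rw q (x / Y c) (B c) a m u * Rw q (y / Y c) m b (T c) u') * (rowN q K Y x u B M (Suc c) n e * rowN q K Y y u' M T (Suc c) n f))"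
    by (subst sum.swap, rule sum.cong[OF refl], rule sum.swap)
  also have "\<dots> = (\<Sum>u\<in>?C. \<Sum>u'\<in>?C. (\<Sum>m\<in>?C. Rw q (x / Y c) (B c) a m u * Rw q (y / Y c) m b (T c) u') * DD q K Y x y u u' B T (Suc c) n e f)"
    unfolding DD_def by (intro sum.cong refl) (simp only: sum_product)
  finally show ?thesis .
qed


lemma swap2: "(\<Sum>i\<in>A. \<Sum>j\<in>B. \<Sum>k\<in>C. \<Sum>l\<in>D. f i j k l) = (\<Sum>k\<in>C. \<Sum>l\<in>D. \<Sum>i\<in>A. \<Sum>j\<in>B. f i j k l)"
proof -
  have "(\<Sum>i\<in>A. \<Sum>j\<in>B. \<Sum>k\<in>C. \<Sum>l\<in>D. f i j k l) = (\<Sum>i\<in>A. \<Sum>k\<in>C. \<Sum>l\<in>D. \<Sum>j\<in>B. f i j k l)"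
    by (intro sum.cong refl, subst sum.swap, rule sum.cong[OF refl], rule sum.swap)
  also have "\<dots> = (\<Sum>k\<in>C. \<Sum>l\<in>D. \<Sum>i\<in>A. \<Sum>j\<in>B. f i j k l)"
    by (subst sum.swap, rule sum.cong[OF refl], rule sum.swap)
  finally show ?thesis .
qed

lemma train_D:
  fixes q x y :: "'a::field" and Y :: "nat \<Rightarrow> 'a"
  assumes nz: "y \<noteq> 0" "x/y - q \<noteq> 0" "\<And>j. c \<le> j \<Longrightarrow> j < c+n \<Longrightarrow> Y j \<noteq> 0 \<and> x / Y j - q \<noteq> 0 \<and> y / Y j - q \<noteq> 0"
    and col: "a \<le> K" "b \<le> K" "e \<le> K" "f \<le> K" "\<And>j. c \<le> j \<Longrightarrow> j < c+n \<Longrightarrow> B j \<le> K \<and> T j \<le> K"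
  shows "(\<Sum>c'\<in>{0..K}. \<Sum>d\<in>{0..K}. Rw q (x/y) a b c' d * DD q K Y x y d c' B T c n e f) =
         (\<Sum>e'\<in>{0..K}. \<Sum>f'\<in>{0..K}. DD q K Y y x a b B T c n e' f' * Rw q (x/y) e' f' f e)"
  using nz(3) col
proof (induction n arbitrary: a b c)
  case 0
  have "(\<Sum>c'\<in>{0..K}. \<Sum>d\<in>{0..K}. Rw q (x/y) a b c' d * DD q K Y x y d c' B T c 0 e f) = Rw q (x/y) a b f e"
  proof -
    have "(\<Sum>d\<in>{0..K}. Rw q (x/y) a b c' d * DD q K Y x y d c' B T c 0 e f) = (if c' = f then Rw q (x/y) a b c' e else 0)" for c'
      using 0 by (subst sum_one[of _ e]) (auto simp: DD_0)
    then show ?thesis using 0 by (simp add: sum.delta')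
  qed
  moreover have "(\<Sum>e'\<in>{0..K}. \<Sum>f'\<in>{0..K}. DD q K Y y x a b B T c 0 e' f' * Rw q (x/y) e' f' f e) = Rw q (x/y) a b f e"
  proof -
    have "(\<Sum>f'\<in>{0..K}. DD q K Y y x a b B T c 0 e' f' * Rw q (x/y) e' f' f e) = (if e' = a then Rw q (x/y) e' b f e else 0)" for e'
      using 0 by (subst sum_one[of _ b]) (auto simp: DD_0)
    then show ?thesis using 0 by (simp add: sum.delta')
  qed
  ultimately show ?case by simp
next
  case (Suc n)
  let ?C = "{0..K}"
  let ?z1 = "x / y" and ?z3 = "y / Y c"
  have Yc: "Y c \<noteq> 0" "x / Y c - q \<noteq> 0" "y / Y c - q \<noteq> 0" using Suc.prems(1)[of c] by auto
  have zz: "?z1 * ?z3 = x / Y c" using nz(1) by simp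
  have BT: "B c \<le> K" "T c \<le> K" using Suc.prems(6)[of c] by auto
  define G where "G g h = (\<Sum>m\<in>?C. Rw q ?z3 (B c) a m g * Rw q (x / Y c) m b (T c) h)" for g h
  define Dxy where "Dxy u u' = DD q K Y x y u u' B T (Suc c) n e f" for u u'
  define Dyx where "Dyx g h e' f' = DD q K Y y x g h B T (Suc c) n e' f'" for g h e' f'
  have IH: "(\<Sum>c'\<in>?C. \<Sum>d\<in>?C. Rw q (x/y) g h c' d * Dxy d c') = (\<Sum>e'\<in>?C. \<Sum>f'\<in>?C. Dyx g h e' f' * Rw q (x/y) e' f' f e)"
    if "g \<le> K" "h \<le> K" for g h
    unfolding Dxy_def Dyx_def using Suc.prems that by (intro Suc.IH) auto
  have "(\<Sum>c'\<in>?C. \<Sum>d\<in>?C. Rw q (x/y) a b c' d * DD q K Y x y d c' B T c (Suc n) e f) =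
        (\<Sum>c'\<in>?C. \<Sum>d\<in>?C. \<Sum>u\<in>?C. \<Sum>u'\<in>?C. Rw q (x/y) a b c' d * ((\<Sum>m\<in>?C. Rw q (x / Y c) (B c) d m u * Rw q (y / Y c) m c' (T c) u') * Dxy u u'))"
    unfolding DD_Suc Dxy_def by (simp add: sum_distrib_left)
  also have "\<dots> = (\<Sum>u\<in>?C. \<Sum>u'\<in>?C. \<Sum>c'\<in>?C. \<Sum>d\<in>?C. Rw q (x/y) a b c' d * ((\<Sum>m\<in>?C. Rw q (x / Y c) (B c) d m u * Rw q (y / Y c) m c' (T c) u') * Dxy u u'))"
    by (rule swap2)
  also have "\<dots> = (\<Sum>u\<in>?C. \<Sum>u'\<in>?C. (\<Sum>c'\<in>?C. \<Sum>d\<in>?C. \<Sum>m\<in>?C. Rw q ?z1 a b c' d * (Rw q (?z1 * ?z3) (B c) d m u * Rw q ?z3 m c' (T c) u')) * Dxy u u')"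
    unfolding zz by (simp add: sum_distrib_left sum_distrib_right ac_simps)
  also have "\<dots> = (\<Sum>u\<in>?C. \<Sum>u'\<in>?C. (\<Sum>g\<in>?C. \<Sum>h\<in>?C. (\<Sum>m\<in>?C. Rw q ?z3 (B c) a m g * Rw q (?z1 * ?z3) m b (T c) h) * Rw q ?z1 g h u' u) * Dxy u u')"
    using Suc.prems BT Yc nz zz by (intro sum.cong refl arg_cong2[where f = times] ybe_local) auto
  also have "\<dots> = (\<Sum>u\<in>?C. \<Sum>u'\<in>?C. \<Sum>g\<in>?C. \<Sum>h\<in>?C. G g h * (Rw q ?z1 g h u' u * Dxy u u'))"
    unfolding zz G_def by (simp add: sum_distrib_left sum_distrib_right ac_simps)
  also have "\<dots> = (\<Sum>g\<in>?C. \<Sum>h\<in>?C. \<Sum>u\<in>?C. \<Sum>u'\<in>?C. G g h * (Rw q ?z1 g h u' u * Dxy u u'))"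
    by (rule swap2)
  also have "\<dots> = (\<Sum>g\<in>?C. \<Sum>h\<in>?C. G g h * (\<Sum>c'\<in>?C. \<Sum>d\<in>?C. Rw q ?z1 g h c' d * Dxy d c'))"
    by (intro sum.cong refl) (simp add: sum_distrib_left, rule sum.swap)
  also have "\<dots> = (\<Sum>g\<in>?C. \<Sum>h\<in>?C. G g h * (\<Sum>e'\<in>?C. \<Sum>f'\<in>?C. Dyx g h e' f' * Rw q (x/y) e' f' f e))"
    using IH by (intro sum.cong refl) auto
  also have "\<dots> = (\<Sum>g\<in>?C. \<Sum>h\<in>?C. \<Sum>e'\<in>?C. \<Sum>f'\<in>?C. G g h * (Dyx g h e' f' * Rw q (x/y) e' f' f e))"
    by (simp add: sum_distrib_left)
  also have "\<dots> = (\<Sum>e'\<in>?C. \<Sum>f'\<in>?C. \<Sum>g\<in>?C. \<Sum>h\<in>?C. G g h * (Dyx g h e' f' * Rw q (x/y) e' f' f e))"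
    by (rule swap2)
  also have "\<dots> = (\<Sum>e'\<in>?C. \<Sum>f'\<in>?C. DD q K Y y x a b B T c (Suc n) e' f' * Rw q (x/y) e' f' f e)"
    unfolding DD_Suc G_def Dyx_def by (simp add: sum_distrib_left sum_distrib_right ac_simps)
  finally show ?case .
qed

fun latN :: "'a::field \<Rightarrow> nat \<Rightarrow> nat \<Rightarrow> (nat \<Rightarrow> 'a) \<Rightarrow> (nat \<Rightarrow> 'a) \<Rightarrow> (nat \<Rightarrow> nat) \<Rightarrow> (nat \<Rightarrow> nat) \<Rightarrow> (nat \<Rightarrow> nat) \<Rightarrow> nat \<Rightarrow> nat \<Rightarrow> 'a" where
  "latN q K k Y X P T B r 0 = (if (\<forall>c\<in>{1..k}. B c = T c) then 1 else 0)"
| "latN q K k Y X P T B r (Suc n) = (\<Sum>M\<in>PiE {1..k} (\<lambda>_. {0..K}). rowN q K Y (X r) (P r) B M 1 k 0 * latN q K k Y X P T M (Suc r) n)"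

lemma latN_cong: "(\<And>i. r \<le> i \<Longrightarrow> X i = X' i \<and> P i = P' i) \<Longrightarrow> latN q K k Y X P T B r n = latN q K k Y X' P' T B r n"
proof (induction n arbitrary: r B)
  case 0
  then show ?case by simp
next
  case (Suc n)
  have "X r = X' r" "P r = P' r" using Suc.prems[of r] by auto
  moreover have "latN q K k Y X P T M (Suc r) n = latN q K k Y X' P' T M (Suc r) n" for M
    using Suc.prems by (intro Suc.IH) auto
  ultimately show ?case by simp
qed

lemma swap3: "(\<Sum>a\<in>A. \<Sum>b\<in>B. \<Sum>c\<in>C. \<Sum>d\<in>D. f a b c d) = (\<Sum>b\<in>B. \<Sum>c\<in>C. \<Sum>d\<in>D. \<Sum>a\<in>A. f a b c d)"
proof -
  have "(\<Sum>a\<in>A. \<Sum>b\<in>B. \<Sum>c\<in>C. \<Sum>d\<in>D. f a b c d) = (\<Sum>b\<in>B. \<Sum>a\<in>A. \<Sum>c\<in>C. \<Sum>d\<in>D. f a b c d)"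
    by (rule sum.swap)
  also have "\<dots> = (\<Sum>b\<in>B. \<Sum>c\<in>C. \<Sum>a\<in>A. \<Sum>d\<in>D. f a b c d)"
    by (rule sum.cong[OF refl], rule sum.swap)
  also have "\<dots> = (\<Sum>b\<in>B. \<Sum>c\<in>C. \<Sum>d\<in>D. \<Sum>a\<in>A. f a b c d)"
    by (rule sum.cong[OF refl], rule sum.cong[OF refl], rule sum.swap)
  finally show ?thesis .
qed

lemma lat_train:
  fixes q :: "'a::field" and X Y :: "nat \<Rightarrow> 'a"
  assumes "r \<le> j" "Suc j < r + n"
    and nz: "X (Suc j) \<noteq> 0" "X j / X (Suc j) - q \<noteq> 0"
       "\<And>c. 1 \<le> c \<Longrightarrow> c \<le> k \<Longrightarrow> Y c \<noteq> 0 \<and> X j / Y c - q \<noteq> 0 \<and> X (Suc j) / Y c - q \<noteq> 0"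
    and col: "P j \<le> K" "P (Suc j) \<le> K" "\<And>c. 1 \<le> c \<Longrightarrow> c \<le> k \<Longrightarrow> B c \<le> K"
  shows "latN q K k Y (\<lambda>i. X (sigma j i)) P T B r n =
    (\<Sum>c'\<in>{0..K}. \<Sum>d\<in>{0..K}. Rw q (X j / X (Suc j)) (P j) (P (Suc j)) c' d * latN q K k Y X (P(j := d, Suc j := c')) T B r n)"
  using assms(1,2) col(3)
proof (induction n arbitrary: r B)
  case 0
  then show ?case by simp
next
  case (Suc n)
  let ?C = "{0..K}"
  let ?PM = "PiE {1..k} (\<lambda>_. ?C)"
  let ?X' = "\<lambda>i. X (sigma j i)"
  let ?R = "\<lambda>c' d. Rw q (X j / X (Suc j)) (P j) (P (Suc j)) c' d"
  let ?P'' = "\<lambda>c' d. P(j := d, Suc j := c')"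
  show ?case
  proof (cases "r < j")
    case True
    have sr: "sigma j r = r" using True by (auto simp: sigma_simps)
    have Pr: "?P'' c' d r = P r" for c' d using True by auto
    have IH: "latN q K k Y ?X' P T M (Suc r) n = (\<Sum>c'\<in>?C. \<Sum>d\<in>?C. ?R c' d * latN q K k Y X (?P'' c' d) T M (Suc r) n)"
      if "M \<in> ?PM" for M
      using Suc.prems True that by (intro Suc.IH) (auto simp: PiE_iff)
    have "latN q K k Y ?X' P T B r (Suc n) = (\<Sum>M\<in>?PM. rowN q K Y (X r) (P r) B M 1 k 0 * (\<Sum>c'\<in>?C. \<Sum>d\<in>?C. ?R c' d * latN q K k Y X (?P'' c' d) T M (Suc r) n))"
      using IH by (simp add: sr)
    also have "\<dots> = (\<Sum>M\<in>?PM. \<Sum>c'\<in>?C. \<Sum>d\<in>?C. ?R c' d * (rowN q K Y (X r) (P r) B M 1 k 0 * latN q K k Y X (?P'' c' d) T M (Suc r) n))"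
      by (simp add: sum_distrib_left ac_simps)
    also have "\<dots> = (\<Sum>c'\<in>?C. \<Sum>d\<in>?C. \<Sum>M\<in>?PM. ?R c' d * (rowN q K Y (X r) (P r) B M 1 k 0 * latN q K k Y X (?P'' c' d) T M (Suc r) n))"
      by (subst sum.swap, rule sum.cong[OF refl], rule sum.swap)
    also have "\<dots> = (\<Sum>c'\<in>?C. \<Sum>d\<in>?C. ?R c' d * latN q K k Y X (?P'' c' d) T B r (Suc n))"
      by (simp only: latN.simps Pr sum_distrib_left)
    finally show ?thesis .
  next
    case False
    then have rj: "r = j" using Suc.prems by auto
    then obtain n' where n': "n = Suc n'" using Suc.prems by (cases n) auto
    let ?x = "X j" and ?y = "X (Suc j)"
    define L where "L M' = latN q K k Y X P T M' (Suc (Suc j)) n'" for M'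
    have L1: "latN q K k Y ?X' P T M' (Suc (Suc j)) n' = L M'" for M'
      unfolding L_def by (rule latN_cong) (auto simp: sigma_simps)
    have L2: "latN q K k Y X (?P'' c' d) T M' (Suc (Suc j)) n' = L M'" for M' c' d
      unfolding L_def by (rule latN_cong) auto
    have ivl: "{1..<1+k} = {1..k}" by auto
    have DDe: "DD q K Y u v a b B M' 1 k 0 0 = (\<Sum>M\<in>?PM. rowN q K Y u a B M 1 k 0 * rowN q K Y v b M M' 1 k 0)" for u v a b M'
      unfolding DD_def ivl ..
    have "latN q K k Y ?X' P T B r (Suc n) = (\<Sum>M\<in>?PM. rowN q K Y ?y (P j) B M 1 k 0 * (\<Sum>M'\<in>?PM. rowN q K Y ?x (P (Suc j)) M M' 1 k 0 * L M'))"
      by (simp add: rj n' sigma_simps L1)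
    also have "\<dots> = (\<Sum>M'\<in>?PM. DD q K Y ?y ?x (P j) (P (Suc j)) B M' 1 k 0 0 * L M')"
      unfolding DDe by (simp add: sum_distrib_left sum_distrib_right ac_simps) (rule sum.swap)
    also have "\<dots> = (\<Sum>M'\<in>?PM. (\<Sum>c'\<in>?C. \<Sum>d\<in>?C. ?R c' d * DD q K Y ?x ?y d c' B M' 1 k 0 0) * L M')"
    proof (intro sum.cong refl arg_cong2[where f = times])
      fix M' assume M': "M' \<in> ?PM"
      have "(\<Sum>c'\<in>?C. \<Sum>d\<in>?C. ?R c' d * DD q K Y ?x ?y d c' B M' 1 k 0 0) =
            (\<Sum>e'\<in>?C. \<Sum>f'\<in>?C. DD q K Y ?y ?x (P j) (P (Suc j)) B M' 1 k e' f' * Rw q (?x / ?y) e' f' 0 0)"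
        using nz col Suc.prems M' by (intro train_D) (auto simp: PiE_iff)
      also have "\<dots> = DD q K Y ?y ?x (P j) (P (Suc j)) B M' 1 k 0 0"
        by (subst sum_in2) (auto simp: Rw_def)
      finally show "DD q K Y ?y ?x (P j) (P (Suc j)) B M' 1 k 0 0 = (\<Sum>c'\<in>?C. \<Sum>d\<in>?C. ?R c' d * DD q K Y ?x ?y d c' B M' 1 k 0 0)" by simp
    qed
    also have "\<dots> = (\<Sum>c'\<in>?C. \<Sum>d\<in>?C. ?R c' d * (\<Sum>M\<in>?PM. rowN q K Y ?x d B M 1 k 0 * (\<Sum>M'\<in>?PM. rowN q K Y ?y c' M M' 1 k 0 * L M')))"
      unfolding DDe by (simp add: sum_distrib_left sum_distrib_right ac_simps) (rule swap3)
    also have "\<dots> = (\<Sum>c'\<in>?C. \<Sum>d\<in>?C. ?R c' d * latN q K k Y X (?P'' c' d) T B r (Suc n))"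
      by (simp add: rj n' L2)
    finally show ?thesis .
  qed
qed

lemma rowN_prod:
  assumes "1 \<le> n" "e \<le> K"
  shows "rowN q K Y x a B A c n e = (\<Sum>g\<in>PiE {c..<c+n-1} (\<lambda>_. {0..K}).
     \<Prod>j\<in>{c..<c+n}. Rw q (x / Y j) (B j) (if j = c then a else g (j-1)) (A j) (if j = c+n-1 then e else g j))"
  using assms(1)
proof (induction n arbitrary: a c rule: nat_induct_at_least)
  case base
  have "rowN q K Y x a B A c 1 e = Rw q (x / Y c) (B c) a (A c) e"
    using assms(2) by (simp add: sum.delta' if_distrib[of "\<lambda>t. _ * t"] cong: if_cong)
  then show ?case by simp
next
  case (Suc n)
  let ?C = "{0..K}"
  let ?F = "\<lambda>g j. Rw q (x / Y j) (B j) (if j = c then a else g (j-1)) (A j) (if j = c + Suc n - 1 then e else g j)"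
  have ins: "{c..<c+n} = insert c {Suc c..<Suc c + n - 1}" using Suc by auto
  have ins2: "{c..<c + Suc n} = insert c {Suc c..<Suc c + n}" by auto
  have "(\<Sum>g\<in>PiE {c..<c + Suc n - 1} (\<lambda>_. ?C). \<Prod>j\<in>{c..<c + Suc n}. ?F g j)
      = (\<Sum>m\<in>?C. \<Sum>g\<in>PiE {Suc c..<Suc c + n - 1} (\<lambda>_. ?C). \<Prod>j\<in>{c..<c + Suc n}. ?F (g(c := m)) j)"
  proof -
    have e: "{c..<c + Suc n - 1} = insert c {Suc c..<Suc c + n - 1}" using Suc by auto
    show ?thesis unfolding e by (rule sum_PiE_insert) auto
  qed
  also have "\<dots> = (\<Sum>m\<in>?C. Rw q (x / Y c) (B c) a (A c) m * (\<Sum>g\<in>PiE {Suc c..<Suc c + n - 1} (\<lambda>_. ?C).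
       \<Prod>j\<in>{Suc c..<Suc c+n}. Rw q (x / Y j) (B j) (if j = Suc c then m else g (j-1)) (A j) (if j = Suc c+n-1 then e else g j)))"
  proof (rule sum.cong[OF refl])
    fix m
    have eq: "(\<Prod>j\<in>{c..<c + Suc n}. ?F (g(c := m)) j) = Rw q (x / Y c) (B c) a (A c) m *
       (\<Prod>j\<in>{Suc c..<Suc c+n}. Rw q (x / Y j) (B j) (if j = Suc c then m else g (j-1)) (A j) (if j = Suc c+n-1 then e else g j))" for g
    proof -
      have "(\<Prod>j\<in>{c..<c + Suc n}. ?F (g(c := m)) j) = ?F (g(c := m)) c * (\<Prod>j\<in>{Suc c..<Suc c + n}. ?F (g(c := m)) j)"
        unfolding ins2 by simp
      also have "?F (g(c := m)) c = Rw q (x / Y c) (B c) a (A c) m" using Suc by auto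
      also have "(\<Prod>j\<in>{Suc c..<Suc c + n}. ?F (g(c := m)) j) =
         (\<Prod>j\<in>{Suc c..<Suc c+n}. Rw q (x / Y j) (B j) (if j = Suc c then m else g (j-1)) (A j) (if j = Suc c+n-1 then e else g j))"
        by (rule prod.cong) auto
      finally show ?thesis .
    qed
    show "(\<Sum>g\<in>PiE {Suc c..<Suc c + n - 1} (\<lambda>_. ?C). \<Prod>j\<in>{c..<c + Suc n}. ?F (g(c := m)) j) = Rw q (x / Y c) (B c) a (A c) m * (\<Sum>g\<in>PiE {Suc c..<Suc c + n - 1} (\<lambda>_. ?C).
       \<Prod>j\<in>{Suc c..<Suc c+n}. Rw q (x / Y j) (B j) (if j = Suc c then m else g (j-1)) (A j) (if j = Suc c+n-1 then e else g j))"
      unfolding eq by (simp add: sum_distrib_left)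
  qed
  also have "\<dots> = rowN q K Y x a B A c (Suc n) e"
    using Suc.IH by simp
  finally show ?case by simp
qed

lemma sum_curry:
  "(\<Sum>h\<in>PiE (A \<times> B) (\<lambda>_. S). F h) = (\<Sum>H\<in>PiE A (\<lambda>_. PiE B (\<lambda>_. S)). F (\<lambda>(a, b). if a \<in> A \<and> b \<in> B then H a b else undefined))"
proof -
  let ?i = "\<lambda>H. (\<lambda>(a, b). if a \<in> A \<and> b \<in> B then H a b else undefined)"
  let ?j = "\<lambda>h. (\<lambda>a. if a \<in> A then (\<lambda>b. if b \<in> B then h (a, b) else undefined) else undefined)"
  have ij: "?i (?j h) = h" if "h \<in> PiE (A \<times> B) (\<lambda>_. S)" for h
  proof (rule ext)
    fix x show "?i (?j h) x = h x"
    proof (cases x)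
      case (Pair a b)
      then show ?thesis using that by (auto simp: PiE_def extensional_def)
    qed
  qed
  show ?thesis
    by (rule sum.reindex_bij_witness[where i = ?i and j = ?j])
       (use ij in \<open>auto simp: PiE_def extensional_def fun_eq_iff Pi_def\<close>)
qed

definition St :: "nat \<Rightarrow> nat \<Rightarrow> (nat \<Rightarrow> nat) \<Rightarrow> (nat \<Rightarrow> nat) \<Rightarrow> (nat \<Rightarrow> nat \<Rightarrow> nat) \<Rightarrow> nat \<Rightarrow> nat \<Rightarrow> nat" where
  "St k r0 T B V i = (if i = r0 - 1 then B else if i = k then T else V i)"

lemma lat_sum:
  assumes "1 \<le> r0" "r0 \<le> k" "\<forall>c\<in>{1..k}. T c \<le> K"
  shows "latN q K k Y X P T B r0 (Suc (k - r0)) =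
    (\<Sum>V\<in>PiE {r0..<k} (\<lambda>_. PiE {1..k} (\<lambda>_. {0..K})).
       \<Prod>i\<in>{r0..k}. rowN q K Y (X i) (P i) (St k r0 T B V (i - 1)) (St k r0 T B V i) 1 k 0)"
proof -
  have "\<And>r0 B. k - r0 = d \<Longrightarrow> 1 \<le> r0 \<Longrightarrow> r0 \<le> k \<Longrightarrow> latN q K k Y X P T B r0 (Suc (k - r0)) =
    (\<Sum>V\<in>PiE {r0..<k} (\<lambda>_. PiE {1..k} (\<lambda>_. {0..K})).
       \<Prod>i\<in>{r0..k}. rowN q K Y (X i) (P i) (St k r0 T B V (i - 1)) (St k r0 T B V i) 1 k 0)" for d
  proof (induction d)
    case 0
    then have r0: "r0 = k" by auto
    let ?PM = "PiE {1..k} (\<lambda>_. {0..K})"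
    let ?T = "restrict T {1..k}"
    have Tin: "?T \<in> ?PM" using assms(3) by auto
    have "latN q K k Y X P T B r0 (Suc (k - r0)) = (\<Sum>M\<in>?PM. rowN q K Y (X k) (P k) B M 1 k 0 * (if \<forall>c\<in>{1..k}. M c = T c then 1 else 0))"
      using r0 by simp
    also have "\<dots> = rowN q K Y (X k) (P k) B ?T 1 k 0"
    proof (subst sum_one[OF _ Tin])
      show "rowN q K Y (X k) (P k) B ?T 1 k 0 * (if \<forall>c\<in>{1..k}. ?T c = T c then 1 else 0) = rowN q K Y (X k) (P k) B ?T 1 k 0" by simp
      fix M assume M: "M \<in> ?PM" "M \<noteq> ?T"
      have "\<not> (\<forall>c\<in>{1..k}. M c = T c)"
      proof
        assume h: "\<forall>c\<in>{1..k}. M c = T c"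
        have "M = ?T" by (rule PiE_ext[OF M(1) Tin]) (use h in auto)
        with M(2) show False by simp
      qed
      then show "rowN q K Y (X k) (P k) B M 1 k 0 * (if \<forall>c\<in>{1..k}. M c = T c then 1 else 0) = 0" by (simp only: if_False mult_zero_right)
    qed (auto intro: finite_PiE)
    also have "\<dots> = rowN q K Y (X k) (P k) B T 1 k 0"
      by (rule rowN_cong) auto
    moreover have "k \<noteq> k - 1" using 0 r0 by arith
    ultimately show ?case using r0 0 by (simp add: St_def)
  next
    case (Suc d)
    let ?PM = "PiE {1..k} (\<lambda>_. {0..K})"
    have lt: "r0 < k" and kr: "k - Suc r0 = d" using Suc.prems by auto
    have sk: "Suc (k - r0) = Suc (Suc (k - Suc r0))" using lt by auto
    have IH: "latN q K k Y X P T M (Suc r0) (Suc (k - Suc r0)) =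
      (\<Sum>V\<in>PiE {Suc r0..<k} (\<lambda>_. ?PM). \<Prod>i\<in>{Suc r0..k}. rowN q K Y (X i) (P i) (St k (Suc r0) T M V (i - 1)) (St k (Suc r0) T M V i) 1 k 0)" for M
      using kr lt by (intro Suc.IH) auto
    have ins: "{r0..<k} = insert r0 {Suc r0..<k}" using lt by auto
    have ins2: "{r0..k} = insert r0 {Suc r0..k}" using lt by auto
    have "latN q K k Y X P T B r0 (Suc (k - r0)) = (\<Sum>M\<in>?PM. rowN q K Y (X r0) (P r0) B M 1 k 0 *
      (\<Sum>V\<in>PiE {Suc r0..<k} (\<lambda>_. ?PM). \<Prod>i\<in>{Suc r0..k}. rowN q K Y (X i) (P i) (St k (Suc r0) T M V (i - 1)) (St k (Suc r0) T M V i) 1 k 0))"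
      by (subst sk, subst latN.simps(2), simp only: IH)
    also have "\<dots> = (\<Sum>M\<in>?PM. \<Sum>V\<in>PiE {Suc r0..<k} (\<lambda>_. ?PM).
        \<Prod>i\<in>{r0..k}. rowN q K Y (X i) (P i) (St k r0 T B (V(r0 := M)) (i - 1)) (St k r0 T B (V(r0 := M)) i) 1 k 0)"
    proof (rule sum.cong[OF refl])
      fix M
      have eq: "(\<Prod>i\<in>{r0..k}. rowN q K Y (X i) (P i) (St k r0 T B (V(r0 := M)) (i - 1)) (St k r0 T B (V(r0 := M)) i) 1 k 0) =
         rowN q K Y (X r0) (P r0) B M 1 k 0 * (\<Prod>i\<in>{Suc r0..k}. rowN q K Y (X i) (P i) (St k (Suc r0) T M V (i - 1)) (St k (Suc r0) T M V i) 1 k 0)" for V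
      proof -
        have a: "St k r0 T B (V(r0 := M)) (r0 - 1) = B" "St k r0 T B (V(r0 := M)) r0 = M"
          using Suc.prems lt by (auto simp: St_def)
        have b: "(\<Prod>i\<in>{Suc r0..k}. rowN q K Y (X i) (P i) (St k r0 T B (V(r0 := M)) (i - 1)) (St k r0 T B (V(r0 := M)) i) 1 k 0) =
                 (\<Prod>i\<in>{Suc r0..k}. rowN q K Y (X i) (P i) (St k (Suc r0) T M V (i - 1)) (St k (Suc r0) T M V i) 1 k 0)"
        proof (rule prod.cong[OF refl])
          fix i assume i: "i \<in> {Suc r0..k}"
          have "St k r0 T B (V(r0 := M)) (i - 1) = St k (Suc r0) T M V (i - 1)"
            using Suc.prems lt i unfolding St_def by auto
          moreover have "St k r0 T B (V(r0 := M)) i = St k (Suc r0) T M V i"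
            using Suc.prems lt i unfolding St_def by auto
          ultimately show "rowN q K Y (X i) (P i) (St k r0 T B (V(r0 := M)) (i - 1)) (St k r0 T B (V(r0 := M)) i) 1 k 0 =
            rowN q K Y (X i) (P i) (St k (Suc r0) T M V (i - 1)) (St k (Suc r0) T M V i) 1 k 0" by simp
        qed
        show ?thesis unfolding ins2 using a b by simp
      qed
      show "rowN q K Y (X r0) (P r0) B M 1 k 0 * (\<Sum>V\<in>PiE {Suc r0..<k} (\<lambda>_. ?PM). \<Prod>i\<in>{Suc r0..k}. rowN q K Y (X i) (P i) (St k (Suc r0) T M V (i - 1)) (St k (Suc r0) T M V i) 1 k 0) =
        (\<Sum>V\<in>PiE {Suc r0..<k} (\<lambda>_. ?PM). \<Prod>i\<in>{r0..k}. rowN q K Y (X i) (P i) (St k r0 T B (V(r0 := M)) (i - 1)) (St k r0 T B (V(r0 := M)) i) 1 k 0)"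
        unfolding eq by (simp add: sum_distrib_left)
    qed
    also have "\<dots> = (\<Sum>V\<in>PiE {r0..<k} (\<lambda>_. ?PM). \<Prod>i\<in>{r0..k}. rowN q K Y (X i) (P i) (St k r0 T B V (i - 1)) (St k r0 T B V i) 1 k 0)"
      unfolding ins by (rule sum_PiE_insert[symmetric]) auto
    finally show ?case .
  qed
  then show ?thesis using assms by blast
qed


lemma rowN_prod1:
  assumes "1 \<le> k"
  shows "rowN q K Y x a B A 1 k 0 = (\<Sum>g\<in>PiE {1..<k} (\<lambda>_. {0..K}).
     \<Prod>j\<in>{1..k}. Rw q (x / Y j) (B j) (if j = 1 then a else g (j-1)) (A j) (if j = k then 0 else g j))"
proof -
  have e1: "{1..<1+k-1} = {1..<k}" "{1..<1+k} = {1..k}" "1 + k - 1 = k" by auto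
  show ?thesis using rowN_prod[OF assms, of 0 K q Y x a B A 1] unfolding e1 by simp
qed

lemma Zpf_rows:
  assumes "1 \<le> k"
  shows "(\<Sum>h\<in>({1..k} \<times> {1..<k}) \<rightarrow>\<^sub>E {0..k}.
      \<Prod>r\<in>{1..k}. \<Prod>c\<in>{1..k}.
        Rw q (w (rho r) / w c) (vcol k v (r - 1) c) (hcol k p h r (c - 1)) (vcol k v r c) (hcol k p h r c))
    = (\<Prod>r\<in>{1..k}. rowN q k w (w (rho r)) (p r) (vcol k v (r - 1)) (vcol k v r) 1 k 0)"
proof -
  let ?C = "{0..k}"
  let ?unc = "\<lambda>H. (\<lambda>(a, b). if a \<in> {1..k} \<and> b \<in> {1..<k} then H a b else undefined)"
  define G where "G r g = (\<Prod>c\<in>{1..k}. Rw q (w (rho r) / w c) (vcol k v (r - 1) c)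
      (if c = 1 then p r else g (c - 1)) (vcol k v r c) (if c = k then 0 else g c))" for r g
  have "(\<Sum>h\<in>({1..k} \<times> {1..<k}) \<rightarrow>\<^sub>E ?C.
      \<Prod>r\<in>{1..k}. \<Prod>c\<in>{1..k}.
        Rw q (w (rho r) / w c) (vcol k v (r - 1) c) (hcol k p h r (c - 1)) (vcol k v r c) (hcol k p h r c))
    = (\<Sum>H\<in>PiE {1..k} (\<lambda>_. PiE {1..<k} (\<lambda>_. ?C)).
      \<Prod>r\<in>{1..k}. \<Prod>c\<in>{1..k}.
        Rw q (w (rho r) / w c) (vcol k v (r - 1) c) (hcol k p (?unc H) r (c - 1)) (vcol k v r c) (hcol k p (?unc H) r c))"
    by (rule sum_curry)
  also have "\<dots> = (\<Sum>H\<in>PiE {1..k} (\<lambda>_. PiE {1..<k} (\<lambda>_. ?C)). \<Prod>r\<in>{1..k}. G r (H r))"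
    unfolding G_def
  proof (intro sum.cong refl prod.cong)
    fix H r c assume r: "r \<in> {1..k}" and c: "c \<in> {1..k}"
    have h1: "hcol k p (?unc H) r (c - 1) = (if c = 1 then p r else H r (c - 1))"
      using r c by (auto simp: hcol_def)
    have h2: "hcol k p (?unc H) r c = (if c = k then 0 else H r c)"
      using r c by (auto simp: hcol_def)
    show "Rw q (w (rho r) / w c) (vcol k v (r - 1) c) (hcol k p (?unc H) r (c - 1)) (vcol k v r c) (hcol k p (?unc H) r c) =
      Rw q (w (rho r) / w c) (vcol k v (r - 1) c) (if c = 1 then p r else H r (c - 1)) (vcol k v r c) (if c = k then 0 else H r c)"
      unfolding h1 h2 ..
  qed
  also have "\<dots> = (\<Prod>r\<in>{1..k}. \<Sum>g\<in>PiE {1..<k} (\<lambda>_. ?C). G r g)"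
    by (rule prod_sum_PiE[symmetric]) (auto intro: finite_PiE)
  also have "\<dots> = (\<Prod>r\<in>{1..k}. rowN q k w (w (rho r)) (p r) (vcol k v (r - 1)) (vcol k v r) 1 k 0)"
    by (rule prod.cong[OF refl]) (simp only: G_def rowN_prod1[OF assms])
  finally show ?thesis .
qed

lemma Zpf_lat:
  assumes "1 \<le> k"
  shows "Zpf q k p rho w = latN q k k w (\<lambda>r. w (rho r)) p (\<lambda>c. c) (\<lambda>_. 0) 1 k"
proof -
  let ?C = "{0..k}"
  let ?PM = "PiE {1..k} (\<lambda>_. ?C)"
  let ?unc = "\<lambda>H. (\<lambda>(a, b). if a \<in> {1..<k} \<and> b \<in> {1..k} then H a b else undefined)"
  have "Zpf q k p rho w = (\<Sum>v\<in>({1..<k} \<times> {1..k}) \<rightarrow>\<^sub>E ?C. \<Sum>h\<in>({1..k} \<times> {1..<k}) \<rightarrow>\<^sub>E ?C.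
      \<Prod>r\<in>{1..k}. \<Prod>c\<in>{1..k}.
        Rw q (w (rho r) / w c) (vcol k v (r - 1) c) (hcol k p h r (c - 1)) (vcol k v r c) (hcol k p h r c))"
    unfolding Zpf_def by (rule sum.swap)
  also have "\<dots> = (\<Sum>v\<in>({1..<k} \<times> {1..k}) \<rightarrow>\<^sub>E ?C. \<Prod>r\<in>{1..k}. rowN q k w (w (rho r)) (p r) (vcol k v (r - 1)) (vcol k v r) 1 k 0)"
    by (intro sum.cong refl Zpf_rows assms)
  also have "\<dots> = (\<Sum>V\<in>PiE {1..<k} (\<lambda>_. ?PM). \<Prod>r\<in>{1..k}. rowN q k w (w (rho r)) (p r) (vcol k (?unc V) (r - 1)) (vcol k (?unc V) r) 1 k 0)"
    by (rule sum_curry)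
  also have "\<dots> = (\<Sum>V\<in>PiE {1..<k} (\<lambda>_. ?PM). \<Prod>r\<in>{1..k}. rowN q k w (w (rho r)) (p r) (St k 1 (\<lambda>c. c) (\<lambda>_. 0) V (r - 1)) (St k 1 (\<lambda>c. c) (\<lambda>_. 0) V r) 1 k 0)"
  proof (intro sum.cong refl prod.cong rowN_cong conjI)
    fix V r j assume r: "r \<in> {1..k}" and j: "1 \<le> j" "j < 1 + k"
    show "vcol k (?unc V) (r - 1) j = St k 1 (\<lambda>c. c) (\<lambda>_. 0) V (r - 1) j"
      using r j by (auto simp: vcol_def St_def)
    show "vcol k (?unc V) r j = St k 1 (\<lambda>c. c) (\<lambda>_. 0) V r j"
      using r j by (auto simp: vcol_def St_def)
  qed
  also have "\<dots> = latN q k k w (\<lambda>r. w (rho r)) p (\<lambda>c. c) (\<lambda>_. 0) 1 (Suc (k - 1))"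
    using assms by (intro lat_sum[symmetric]) auto
  also have "Suc (k - 1) = k" using assms by simp
  finally show ?thesis .
qed

lemma Rw_zero: "\<not> ((c = a \<and> d = b) \<or> (c = b \<and> d = a)) \<Longrightarrow> Rw q z a b c d = 0"
  using Rw_nz by blast

lemma rowN_split:
  assumes "a \<le> K"
  shows "rowN q K Y x a B A c (n1 + n2) e = (\<Sum>h\<in>{0..K}. rowN q K Y x a B A c n1 h * rowN q K Y x h B A (c + n1) n2 e)"
  using assms
proof (induction n1 arbitrary: a c)
  case 0
  then show ?case by (subst sum_one[of _ a]) auto
next
  case (Suc n1)
  have "rowN q K Y x a B A c (Suc n1 + n2) e = (\<Sum>m\<in>{0..K}. Rw q (x / Y c) (B c) a (A c) m * rowN q K Y x m B A (Suc c) (n1 + n2) e)"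
    by simp
  also have "\<dots> = (\<Sum>m\<in>{0..K}. Rw q (x / Y c) (B c) a (A c) m * (\<Sum>h\<in>{0..K}. rowN q K Y x m B A (Suc c) n1 h * rowN q K Y x h B A (Suc c + n1) n2 e))"
    using Suc.IH by (intro sum.cong refl) auto
  also have "\<dots> = (\<Sum>h\<in>{0..K}. (\<Sum>m\<in>{0..K}. Rw q (x / Y c) (B c) a (A c) m * rowN q K Y x m B A (Suc c) n1 h) * rowN q K Y x h B A (Suc c + n1) n2 e)"
    by (simp add: sum_distrib_left sum_distrib_right ac_simps) (rule sum.swap)
  also have "\<dots> = (\<Sum>h\<in>{0..K}. rowN q K Y x a B A c (Suc n1) h * rowN q K Y x h B A (c + Suc n1) n2 e)"
    by simp
  finally show ?case .
qed

lemma all_split: "(\<forall>j. c \<le> j \<and> j < c + Suc n \<longrightarrow> Q j) \<longleftrightarrow> Q c \<and> (\<forall>j. Suc c \<le> j \<and> j < Suc c + n \<longrightarrow> Q j)"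
proof safe
  fix j assume "Q c" "\<forall>j. Suc c \<le> j \<and> j < Suc c + n \<longrightarrow> Q j" "c \<le> j" "j < c + Suc n"
  then show "Q j" by (cases "j = c") auto
qed auto

lemma seg_pre:
  assumes "\<And>j. c \<le> j \<Longrightarrow> j < c + n \<Longrightarrow> A j = j \<and> j < a \<and> B j \<le> K" "a \<le> K"
  shows "rowN q K Y x a B A c n h = (if h = a \<and> (\<forall>j. c \<le> j \<and> j < c + n \<longrightarrow> B j = j) then (\<Prod>j\<in>{c..<c+n}. Rw q (x / Y j) j a j a) else 0)"
  using assms(1)
proof (induction n arbitrary: c)
  case 0
  then show ?case by auto
next
  case (Suc n)
  have Ac: "A c = c" "c < a" "B c \<le> K" using Suc.prems[of c] by auto
  have IH: "rowN q K Y x a B A (Suc c) n h = (if h = a \<and> (\<forall>j. Suc c \<le> j \<and> j < Suc c + n \<longrightarrow> B j = j) then (\<Prod>j\<in>{Suc c..<Suc c+n}. Rw q (x / Y j) j a j a) else 0)"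
    using Suc.prems by (intro Suc.IH) auto
  have "rowN q K Y x a B A c (Suc n) h = Rw q (x / Y c) (B c) a c (if c = B c then a else B c) * rowN q K Y x (if c = B c then a else B c) B A (Suc c) n h"
    using Ac assms(2) by (simp add: sum_right)
  also have "\<dots> = (if h = a \<and> (\<forall>j. c \<le> j \<and> j < c + Suc n \<longrightarrow> B j = j) then (\<Prod>j\<in>{c..<c+Suc n}. Rw q (x / Y j) j a j a) else 0)"
  proof (cases "B c = c")
    case True
    have ins: "{c..<c + Suc n} = insert c {Suc c..<Suc c + n}" by auto
    have pr: "(\<Prod>j\<in>{c..<c+Suc n}. Rw q (x / Y j) j a j a) = Rw q (x / Y c) c a c a * (\<Prod>j\<in>{Suc c..<Suc c+n}. Rw q (x / Y j) j a j a)"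
      unfolding ins by simp
    have c1: "(\<forall>j. c \<le> j \<and> j < c + Suc n \<longrightarrow> B j = j) \<longleftrightarrow> (\<forall>j. Suc c \<le> j \<and> j < Suc c + n \<longrightarrow> B j = j)"
      using all_split[of c n "\<lambda>j. B j = j"] True by simp
    show ?thesis
    proof (cases "h = a \<and> (\<forall>j. Suc c \<le> j \<and> j < Suc c + n \<longrightarrow> B j = j)")
      case T: True
      then have "rowN q K Y x a B A (Suc c) n h = (\<Prod>j\<in>{Suc c..<Suc c+n}. Rw q (x / Y j) j a j a)"
        by (subst IH) (use T in simp)
      then show ?thesis using T c1 pr True by simp
    next
      case F: False
      then have "rowN q K Y x a B A (Suc c) n h = 0"
        by (subst IH) (simp only: F if_False)
      moreover have nc: "\<not> (h = a \<and> (\<forall>j. c \<le> j \<and> j < c + Suc n \<longrightarrow> B j = j))" using F c1 by blast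
      ultimately show ?thesis using True by (simp only: nc if_False, simp)
    qed
  next
    case False
    have "Rw q (x / Y c) (B c) a c (B c) = 0"
      by (rule Rw_zero) (use False Ac in auto)
    moreover have "\<not> (h = a \<and> (\<forall>j. c \<le> j \<and> j < c + Suc n \<longrightarrow> B j = j))" using False by auto
    moreover have "(if c = B c then a else B c) = B c" using False by simp
    ultimately show ?thesis by (simp only: if_False mult_zero_left)
  qed
  finally show ?case .
qed


lemma seg_suf:
  assumes "\<And>j. c \<le> j \<Longrightarrow> j < c + n \<Longrightarrow> A j = 0 \<and> B j \<le> K" "h \<le> K"
  shows "rowN q K Y x h B A c n 0 = (if h = 0 \<and> (\<forall>j. c \<le> j \<and> j < c + n \<longrightarrow> B j = 0) then 1 else 0)"
  using assms
proof (induction n arbitrary: h c)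
  case 0
  then show ?case by auto
next
  case (Suc n)
  have Ac: "A c = 0" "B c \<le> K" using Suc.prems(1)[of c] by auto
  have IH: "rowN q K Y x m B A (Suc c) n 0 = (if m = 0 \<and> (\<forall>j. Suc c \<le> j \<and> j < Suc c + n \<longrightarrow> B j = 0) then 1 else 0)"
    if "m \<le> K" for m
    using Suc.prems that by (intro Suc.IH) auto
  have "rowN q K Y x h B A c (Suc n) 0 = Rw q (x / Y c) (B c) h 0 (if 0 = B c then h else B c) * rowN q K Y x (if 0 = B c then h else B c) B A (Suc c) n 0"
    using Ac Suc.prems(2) by (simp add: sum_right)
  also have "\<dots> = (if h = 0 \<and> (\<forall>j. c \<le> j \<and> j < c + Suc n \<longrightarrow> B j = 0) then 1 else 0)"
  proof (cases "B c = 0")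
    case True
    show ?thesis
    proof (cases "h = 0")
      case h0: True
      have r: "Rw q (x / Y c) 0 0 0 0 = 1" by (simp add: Rw_def)
      show ?thesis unfolding all_split[of c n "\<lambda>j. B j = 0"] using True h0 IH[of 0] r by simp
    next
      case h0: False
      have "rowN q K Y x h B A (Suc c) n 0 = 0" using IH[OF Suc.prems(2)] h0 by simp
      then show ?thesis using True h0 by simp
    qed
  next
    case False
    have "rowN q K Y x (B c) B A (Suc c) n 0 = 0" using IH[OF Ac(2)] False by simp
    moreover have "\<not> (h = 0 \<and> (\<forall>j. c \<le> j \<and> j < c + Suc n \<longrightarrow> B j = 0))" using False by auto
    moreover have "(if 0 = B c then h else B c) = B c" using False by simp
    ultimately show ?thesis by (simp only: if_False mult_zero_right)
  qed
  finally show ?case .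
qed


definition Sst :: "nat \<Rightarrow> nat \<Rightarrow> nat" where "Sst r c = (if c \<le> r then c else 0)"

lemma row_id:
  assumes "1 \<le> r" "r \<le> k" "k \<le> K" "\<forall>c\<in>{1..k}. B c \<le> K"
  shows "rowN q K Y x r B (Sst r) 1 k 0 = (if \<forall>c\<in>{1..k}. B c = Sst (r - 1) c then (\<Prod>c\<in>{1..<r}. Rw q (x / Y c) c r c r) * Rw q (x / Y r) 0 r r 0 else 0)"
proof -
  have kk: "(r - 1) + Suc (k - r) = k" using assms by arith
  have r1: "1 + (r - 1) = r" using assms by arith
  have rK: "r \<le> K" using assms by arith
  define cond1 where "cond1 = (\<forall>j. 1 \<le> j \<and> j < r \<longrightarrow> B j = j)"
  define Pi1 where "Pi1 = (\<Prod>j\<in>{1..<r}. Rw q (x / Y j) j r j r)"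
  have pre: "rowN q K Y x r B (Sst r) 1 (r - 1) h = (if h = r \<and> cond1 then Pi1 else 0)" for h
  proof -
    have "rowN q K Y x r B (Sst r) 1 (r - 1) h = (if h = r \<and> (\<forall>j. 1 \<le> j \<and> j < 1 + (r - 1) \<longrightarrow> B j = j) then (\<Prod>j\<in>{1..<1 + (r - 1)}. Rw q (x / Y j) j r j r) else 0)"
      using assms rK by (intro seg_pre) (auto simp: Sst_def)
    then show ?thesis unfolding r1 cond1_def Pi1_def .
  qed
  have suf: "rowN q K Y x m B (Sst r) (Suc r) (k - r) 0 = (if m = 0 \<and> (\<forall>j. Suc r \<le> j \<and> j < Suc r + (k - r) \<longrightarrow> B j = 0) then 1 else 0)" if "m \<le> K" for m
    using assms that by (intro seg_suf) (auto simp: Sst_def)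
  have "rowN q K Y x r B (Sst r) 1 k 0 = (\<Sum>h\<in>{0..K}. rowN q K Y x r B (Sst r) 1 (r - 1) h * rowN q K Y x h B (Sst r) r (Suc (k - r)) 0)"
    using rowN_split[OF rK, of q Y x B "Sst r" 1 "r - 1" "Suc (k - r)" 0] unfolding kk r1 .
  also have "\<dots> = (if cond1 then Pi1 else 0) * rowN q K Y x r B (Sst r) r (Suc (k - r)) 0"
    unfolding pre using rK by (subst sum_one[of _ r]) auto
  also have "rowN q K Y x r B (Sst r) r (Suc (k - r)) 0 = Rw q (x / Y r) (B r) r r (if r = B r then r else B r) * rowN q K Y x (if r = B r then r else B r) B (Sst r) (Suc r) (k - r) 0"
  proof -
    have "B r \<le> K" using assms by auto
    then show ?thesis using rK by (simp add: sum_right Sst_def)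
  qed
  also have "\<dots> = (if B r = 0 \<and> (\<forall>j. Suc r \<le> j \<and> j < Suc r + (k - r) \<longrightarrow> B j = 0) then Rw q (x / Y r) 0 r r 0 else 0)"
  proof (cases "B r = r")
    case True
    have "rowN q K Y x r B (Sst r) (Suc r) (k - r) 0 = 0" using suf[OF rK] assms by simp
    moreover have "\<not> (B r = 0 \<and> (\<forall>j. Suc r \<le> j \<and> j < Suc r + (k - r) \<longrightarrow> B j = 0))" using True assms by auto
    moreover have "(if r = B r then r else B r) = r" using True by simp
    ultimately show ?thesis by (simp only: if_False mult_zero_right)
  next
    case False
    have BK: "B r \<le> K" using assms by auto
    have e: "(if r = B r then r else B r) = B r" using False by simp
    show ?thesis unfolding e suf[OF BK] by auto
  qed
  also have "(if cond1 then Pi1 else 0) *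
     (if B r = 0 \<and> (\<forall>j. Suc r \<le> j \<and> j < Suc r + (k - r) \<longrightarrow> B j = 0) then Rw q (x / Y r) 0 r r 0 else 0) =
     (if \<forall>c\<in>{1..k}. B c = Sst (r - 1) c then (\<Prod>c\<in>{1..<r}. Rw q (x / Y c) c r c r) * Rw q (x / Y r) 0 r r 0 else 0)"
  proof -
    have "(\<forall>c\<in>{1..k}. B c = Sst (r - 1) c) \<longleftrightarrow> cond1 \<and> B r = 0 \<and> (\<forall>j. Suc r \<le> j \<and> j < Suc r + (k - r) \<longrightarrow> B j = 0)"
    proof
      assume h: "\<forall>c\<in>{1..k}. B c = Sst (r - 1) c"
      show "cond1 \<and> B r = 0 \<and> (\<forall>j. Suc r \<le> j \<and> j < Suc r + (k - r) \<longrightarrow> B j = 0)"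
        unfolding cond1_def using h assms by (auto simp: Sst_def)
    next
      assume h: "cond1 \<and> B r = 0 \<and> (\<forall>j. Suc r \<le> j \<and> j < Suc r + (k - r) \<longrightarrow> B j = 0)"
      show "\<forall>c\<in>{1..k}. B c = Sst (r - 1) c"
      proof
        fix c assume c: "c \<in> {1..k}"
        show "B c = Sst (r - 1) c"
        proof (cases "c < r")
          case True then show ?thesis using h c unfolding cond1_def Sst_def by auto
        next
          case False
          then have "c = r \<or> Suc r \<le> c" by auto
          then show ?thesis using h c False assms unfolding Sst_def by auto
        qed
      qed
    qed
    then show ?thesis unfolding Pi1_def by auto
  qed
  finally show ?thesis .
qed


lemma lat_id:
  assumes "k \<le> K" "r \<le> k" "\<forall>c\<in>{1..k}. B c \<le> K"
  shows "latN q K k Y X id (\<lambda>c. c) B (Suc r) (k - r) =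
    (if \<forall>c\<in>{1..k}. B c = Sst r c then (\<Prod>i\<in>{Suc r..k}. (\<Prod>c\<in>{1..<i}. Rw q (X i / Y c) c i c i) * Rw q (X i / Y i) 0 i i 0) else 0)"
proof -
  have "\<And>r B. k - r = d \<Longrightarrow> r \<le> k \<Longrightarrow> \<forall>c\<in>{1..k}. B c \<le> K \<Longrightarrow> latN q K k Y X id (\<lambda>c. c) B (Suc r) (k - r) =
    (if \<forall>c\<in>{1..k}. B c = Sst r c then (\<Prod>i\<in>{Suc r..k}. (\<Prod>c\<in>{1..<i}. Rw q (X i / Y c) c i c i) * Rw q (X i / Y i) 0 i i 0) else 0)" for d
  proof (induction d)
    case 0
    then have rk: "r = k" by auto
    have "(\<forall>c\<in>{1..k}. B c = Sst r c) \<longleftrightarrow> (\<forall>c\<in>{1..k}. B c = c)" using rk by (auto simp: Sst_def)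
    then show ?case using rk by simp
  next
    case (Suc d)
    let ?PM = "PiE {1..k} (\<lambda>_. {0..K})"
    let ?F = "\<lambda>i. (\<Prod>c\<in>{1..<i}. Rw q (X i / Y c) c i c i) * Rw q (X i / Y i) 0 i i 0"
    let ?S = "restrict (Sst (Suc r)) {1..k}"
    have lt: "r < k" and kd: "k - Suc r = d" using Suc.prems by auto
    have kr: "k - r = Suc (k - Suc r)" using lt by auto
    have Sin: "?S \<in> ?PM" using assms(1) by (auto simp: Sst_def)
    have IH: "latN q K k Y X id (\<lambda>c. c) M (Suc (Suc r)) (k - Suc r) =
      (if \<forall>c\<in>{1..k}. M c = Sst (Suc r) c then (\<Prod>i\<in>{Suc (Suc r)..k}. ?F i) else 0)" if "M \<in> ?PM" for M
      using kd lt that by (intro Suc.IH) (auto simp: PiE_iff)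
    have "latN q K k Y X id (\<lambda>c. c) B (Suc r) (k - r) =
      (\<Sum>M\<in>?PM. rowN q K Y (X (Suc r)) (Suc r) B M 1 k 0 * latN q K k Y X id (\<lambda>c. c) M (Suc (Suc r)) (k - Suc r))"
      unfolding kr by simp
    also have "\<dots> = (\<Sum>M\<in>?PM. rowN q K Y (X (Suc r)) (Suc r) B M 1 k 0 *
        (if \<forall>c\<in>{1..k}. M c = Sst (Suc r) c then (\<Prod>i\<in>{Suc (Suc r)..k}. ?F i) else 0))"
      using IH by (intro sum.cong refl) auto
    also have "\<dots> = rowN q K Y (X (Suc r)) (Suc r) B ?S 1 k 0 * (\<Prod>i\<in>{Suc (Suc r)..k}. ?F i)"
    proof (subst sum_one[OF _ Sin])
      fix M assume M: "M \<in> ?PM" "M \<noteq> ?S"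
      have "\<not> (\<forall>c\<in>{1..k}. M c = Sst (Suc r) c)"
      proof
        assume h: "\<forall>c\<in>{1..k}. M c = Sst (Suc r) c"
        have "M = ?S" by (rule PiE_ext[OF M(1) Sin]) (use h in auto)
        with M(2) show False by simp
      qed
      then show "rowN q K Y (X (Suc r)) (Suc r) B M 1 k 0 * (if \<forall>c\<in>{1..k}. M c = Sst (Suc r) c then (\<Prod>i\<in>{Suc (Suc r)..k}. ?F i) else 0) = 0"
        by (simp only: if_False mult_zero_right)
    qed (auto intro: finite_PiE)
    also have "rowN q K Y (X (Suc r)) (Suc r) B ?S 1 k 0 = rowN q K Y (X (Suc r)) (Suc r) B (Sst (Suc r)) 1 k 0"
      by (rule rowN_cong) auto
    also have "\<dots> = (if \<forall>c\<in>{1..k}. B c = Sst r c then ?F (Suc r) else 0)"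
      using row_id[of "Suc r" k K B q Y "X (Suc r)"] Suc.prems assms lt by simp
    also have "(if \<forall>c\<in>{1..k}. B c = Sst r c then ?F (Suc r) else 0) * (\<Prod>i\<in>{Suc (Suc r)..k}. ?F i) =
       (if \<forall>c\<in>{1..k}. B c = Sst r c then (\<Prod>i\<in>{Suc r..k}. ?F i) else 0)"
    proof -
      have "{Suc r..k} = insert (Suc r) {Suc (Suc r)..k}" using lt by auto
      then show ?thesis by simp
    qed
    finally show ?case .
  qed
  then show ?thesis using assms by blast
qed

lemma perms_iff: "s \<in> perms k \<longleftrightarrow> s permutes {1..k}" by (simp add: perms_def)

lemma finite_perms: "finite (perms k)"
  unfolding perms_def by (rule finite_permutations) simp

lemma op_assoc: "op_mult k (op_mult k A B) C = op_mult k A (op_mult k B C)"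
proof (intro ext)
  fix \<tau> :: "nat \<Rightarrow> nat" and w :: "nat \<Rightarrow> 'a"
  have "op_mult k (op_mult k A B) C \<tau> w = (\<Sum>s\<in>perms k. (\<Sum>u\<in>perms k. A u w * B (inv u \<circ> s) (w \<circ> u)) * C (inv s \<circ> \<tau>) (w \<circ> s))"
    unfolding op_mult_def ..
  also have "\<dots> = (\<Sum>u\<in>perms k. \<Sum>s\<in>perms k. A u w * B (inv u \<circ> s) (w \<circ> u) * C (inv s \<circ> \<tau>) (w \<circ> s))"
    by (simp add: sum_distrib_right) (rule sum.swap)
  also have "\<dots> = (\<Sum>u\<in>perms k. \<Sum>v\<in>perms k. A u w * (B v (w \<circ> u) * C (inv v \<circ> (inv u \<circ> \<tau>)) ((w \<circ> u) \<circ> v)))"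
  proof (rule sum.cong[OF refl])
    fix u assume u: "u \<in> perms k"
    then have up: "u permutes {1..k}" by (simp add: perms_iff)
    show "(\<Sum>s\<in>perms k. A u w * B (inv u \<circ> s) (w \<circ> u) * C (inv s \<circ> \<tau>) (w \<circ> s)) =
          (\<Sum>v\<in>perms k. A u w * (B v (w \<circ> u) * C (inv v \<circ> (inv u \<circ> \<tau>)) ((w \<circ> u) \<circ> v)))"
    proof (rule sum.reindex_bij_witness[where i = "\<lambda>v. u \<circ> v" and j = "\<lambda>s. inv u \<circ> s"])
      fix s assume s: "s \<in> perms k"
      show "u \<circ> (inv u \<circ> s) = s" using permutes_inverses(1)[OF up] by (simp add: fun_eq_iff)
      show "inv u \<circ> s \<in> perms k" using s up by (simp add: perms_iff permutes_compose permutes_inv)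
      have sp: "s permutes {1..k}" using s by (simp add: perms_iff)
      have "inv (inv u \<circ> s) = inv s \<circ> u"
        using o_inv_distrib[OF permutes_bij[OF permutes_inv[OF up]] permutes_bij[OF sp]]
              inv_inv_eq[OF permutes_bij[OF up]] by simp
      then have "inv (inv u \<circ> s) \<circ> (inv u \<circ> \<tau>) = inv s \<circ> \<tau>"
        using permutes_inverses(1)[OF up] by (simp add: fun_eq_iff)
      moreover have "(w \<circ> u) \<circ> (inv u \<circ> s) = w \<circ> s"
        using permutes_inverses(1)[OF up] by (simp add: fun_eq_iff)
      ultimately show "A u w * (B (inv u \<circ> s) (w \<circ> u) * C (inv (inv u \<circ> s) \<circ> (inv u \<circ> \<tau>)) ((w \<circ> u) \<circ> (inv u \<circ> s))) =
          A u w * B (inv u \<circ> s) (w \<circ> u) * C (inv s \<circ> \<tau>) (w \<circ> s)" by simp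
    next
      fix v assume v: "v \<in> perms k"
      show "inv u \<circ> (u \<circ> v) = v" using permutes_inverses(2)[OF up] by (simp add: fun_eq_iff)
      show "u \<circ> v \<in> perms k" using v up by (simp add: perms_iff permutes_compose)
    qed
  qed
  also have "\<dots> = op_mult k A (op_mult k B C) \<tau> w"
    unfolding op_mult_def by (simp add: sum_distrib_left)
  finally show "op_mult k (op_mult k A B) C \<tau> w = op_mult k A (op_mult k B C) \<tau> w" .
qed

lemma op_one_left: "op_mult k op_one B = B"
proof (intro ext)
  fix \<tau> :: "nat \<Rightarrow> nat" and w :: "nat \<Rightarrow> 'a"
  have "id \<in> perms k" by (simp add: perms_iff permutes_id)
  then show "op_mult k op_one B \<tau> w = B \<tau> w"
    unfolding op_mult_def op_one_def using finite_perms
    by (simp add: if_distrib[of "\<lambda>t. t * _"] sum.delta' cong: if_cong)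
qed

lemma op_one_right: "u \<in> perms k \<Longrightarrow> op_mult k X op_one u v = X u v"
proof -
  assume u: "u \<in> perms k"
  have eq: "(inv s \<circ> u = id) \<longleftrightarrow> s = u" if "s \<in> perms k" for s
  proof
    assume "inv s \<circ> u = id"
    then have "\<forall>x. inv s (u x) = x" by (simp add: fun_eq_iff)
    then have "\<forall>x. s (inv s (u x)) = s x" by simp
    then show "s = u" using permutes_inverses(1)[of s "{1..k}"] that by (simp add: perms_iff fun_eq_iff)
  next
    assume "s = u" then show "inv s \<circ> u = id" using permutes_inverses(2)[of s "{1..k}"] that by (simp add: perms_iff fun_eq_iff)
  qed
  have "op_mult k X op_one u v = (\<Sum>s\<in>perms k. if s = u then X s v else 0)"
    unfolding op_mult_def op_one_def by (rule sum.cong[OF refl]) (simp add: eq)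
  also have "\<dots> = X u v" using u finite_perms by (simp add: sum.delta')
  finally show ?thesis .
qed

lemma foldr_T: "foldr (\<lambda>i A. op_mult k (T_gen q i) A) ws X = op_mult k (T_word q k ws) X"
  unfolding T_word_def
  by (induction ws) (simp_all add: op_one_left op_assoc)

lemma T_word_snoc: "T_word q k (ws @ [j]) = op_mult k (T_word q k ws) (op_mult k (T_gen q j) op_one)"
proof -
  have "T_word q k (ws @ [j]) = foldr (\<lambda>i A. op_mult k (T_gen q i) A) ws (op_mult k (T_gen q j) op_one)"
    by (simp add: T_word_def)
  also have "\<dots> = op_mult k (T_word q k ws) (op_mult k (T_gen q j) op_one)"
    by (rule foldr_T)
  finally show ?thesis .
qed

lemma T_word_snoc_eval:
  fixes q :: "'a::field"
  assumes tau: "\<tau> permutes {1..k}" and j: "1 \<le> j" "j < k"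
  shows "T_word q k (ws @ [j]) \<tau> w =
    T_word q k ws \<tau> w * (q - (w (\<tau> (Suc j)) - q * w (\<tau> j)) / (w (\<tau> (Suc j)) - w (\<tau> j)))
  + T_word q k ws (\<tau> \<circ> sigma j) w * ((w (\<tau> (sigma j (Suc j))) - q * w (\<tau> (sigma j j))) / (w (\<tau> (sigma j (Suc j))) - w (\<tau> (sigma j j))))"
proof -
  let ?A = "T_word q k ws"
  let ?c = "\<lambda>v::nat \<Rightarrow> 'a. (v (Suc j) - q * v j) / (v (Suc j) - v j)"
  have sp: "sigma j permutes {1..k}" using sigma_permutes[OF j] .
  have ts: "\<tau> \<circ> sigma j permutes {1..k}" using permutes_compose[OF sp tau] .
  have invsig: "inv (sigma j) = sigma j"
    by (metis inv_unique_comp sigma_o_sigma)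
  have e1: "(inv s \<circ> \<tau> = id) \<longleftrightarrow> s = \<tau>" if "s permutes {1..k}" for s
  proof
    assume "inv s \<circ> \<tau> = id"
    then have "\<forall>x. inv s (\<tau> x) = x" by (simp add: fun_eq_iff)
    then have "\<forall>x. s (inv s (\<tau> x)) = s x" by simp
    then show "s = \<tau>" using permutes_inverses(1)[OF that] by (simp add: fun_eq_iff)
  next
    assume "s = \<tau>" then show "inv s \<circ> \<tau> = id" using permutes_inverses(2)[OF that] by (simp add: fun_eq_iff)
  qed
  have e2: "(inv s \<circ> \<tau> = sigma j) \<longleftrightarrow> s = \<tau> \<circ> sigma j" if "s permutes {1..k}" for s
  proof
    assume "inv s \<circ> \<tau> = sigma j"
    then have "\<forall>x. inv s (\<tau> x) = sigma j x" by (simp add: fun_eq_iff)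
    then have "\<forall>x. s (inv s (\<tau> x)) = s (sigma j x)" by simp
    then have "\<forall>x. \<tau> x = s (sigma j x)" using permutes_inverses(1)[OF that] by simp
    then have "\<forall>y. \<tau> (sigma j y) = s y" by (metis sigma_invol)
    then show "s = \<tau> \<circ> sigma j" by (simp add: fun_eq_iff)
  next
    assume "s = \<tau> \<circ> sigma j"
    then have "inv s = inv (sigma j) \<circ> inv \<tau>"
      using o_inv_distrib[OF permutes_bij[OF tau] permutes_bij[OF sp]] by simp
    then show "inv s \<circ> \<tau> = sigma j" using permutes_inverses(2)[OF tau] invsig by (simp add: fun_eq_iff)
  qed
  have sneq: "\<tau> \<circ> sigma j \<noteq> \<tau>"
  proof
    assume "\<tau> \<circ> sigma j = \<tau>"
    then have "\<tau> (sigma j j) = \<tau> j" by (metis comp_apply)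
    then have "\<tau> (Suc j) = \<tau> j" by (simp add: sigma_simps)
    then show False using permutes_inj[OF tau] by (metis injD n_not_Suc_n)
  qed
  have "T_word q k (ws @ [j]) \<tau> w = (\<Sum>s\<in>perms k. ?A s w * T_gen q j (inv s \<circ> \<tau>) (w \<circ> s))"
    unfolding T_word_snoc op_mult_def[of k ?A]
  proof (rule sum.cong[OF refl])
    fix s assume "s \<in> perms k"
    then have "inv s \<circ> \<tau> \<in> perms k" using tau by (simp add: perms_iff permutes_compose permutes_inv)
    then show "?A s w * op_mult k (T_gen q j) op_one (inv s \<circ> \<tau>) (w \<circ> s) = ?A s w * T_gen q j (inv s \<circ> \<tau>) (w \<circ> s)"
      by (simp add: op_one_right)
  qed
  also have "\<dots> = (\<Sum>s\<in>perms k. (if s = \<tau> then ?A s w * (q - ?c (w \<circ> s)) else 0) + (if s = \<tau> \<circ> sigma j then ?A s w * ?c (w \<circ> s) else 0))"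
  proof (rule sum.cong[OF refl])
    fix s assume s: "s \<in> perms k"
    then have sp': "s permutes {1..k}" by (simp add: perms_iff)
    have "id \<noteq> sigma j" by (metis n_not_Suc_n id_apply sigma_simps(1))
    then show "?A s w * T_gen q j (inv s \<circ> \<tau>) (w \<circ> s) = (if s = \<tau> then ?A s w * (q - ?c (w \<circ> s)) else 0) + (if s = \<tau> \<circ> sigma j then ?A s w * ?c (w \<circ> s) else 0)"
      unfolding T_gen_def Let_def using e1[OF sp'] e2[OF sp'] sneq by (auto simp: algebra_simps)
  qed
  also have "\<dots> = ?A \<tau> w * (q - ?c (w \<circ> \<tau>)) + ?A (\<tau> \<circ> sigma j) w * ?c (w \<circ> (\<tau> \<circ> sigma j))"
    using tau ts finite_perms by (simp add: sum.distrib sum.delta' perms_iff)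
  finally show ?thesis by simp
qed

lemma prod_pairs:
  fixes k :: nat
  shows "(\<Prod>i\<in>{1..k}. \<Prod>c\<in>{1..<i}. h c i) = (\<Prod>(a, b)\<in>{(a, b). a \<in> {1..k} \<and> b \<in> {1..k} \<and> a < b}. h a b)"
proof -
  have "(\<Prod>i\<in>{1..k}. \<Prod>c\<in>{1..<i}. h c i) = (\<Prod>(i, c)\<in>(SIGMA i:{1..k}. {1..<i}). h c i)"
    by (rule prod.Sigma) auto
  also have "\<dots> = (\<Prod>(a, b)\<in>{(a, b). a \<in> {1..k} \<and> b \<in> {1..k} \<and> a < b}. h a b)"
    by (rule prod.reindex_bij_witness[where i = "\<lambda>(a, b). (b, a)" and j = "\<lambda>(i, c). (c, i)"]) auto
  finally show ?thesis .
qed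

lemma perm_below:
  fixes \<tau> :: "nat \<Rightarrow> nat"
  assumes "\<tau> permutes {1..k}" "\<tau> \<noteq> id"
  shows "\<exists>i\<in>{1..k}. \<tau> i < i"
proof (rule ccontr)
  assume nt: "\<not> (\<exists>i\<in>{1..k}. \<tau> i < i)"
  have ge: "\<forall>i\<in>{1..k}. i \<le> \<tau> i"
  proof
    fix i assume "i \<in> {1..k}"
    with nt have "\<not> \<tau> i < i" by blast
    then show "i \<le> \<tau> i" by simp
  qed
  obtain i0 where ne: "\<tau> i0 \<noteq> i0" using assms(2) by (metis eq_id_iff)
  have i0: "i0 \<in> {1..k}"
  proof (rule ccontr)
    assume "i0 \<notin> {1..k}"
    then have "\<tau> i0 = i0" by (rule permutes_not_in[OF assms(1)])
    with ne show False by simp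
  qed
  have "i0 \<le> \<tau> i0" using ge i0 by blast
  then have lt: "i0 < \<tau> i0" using ne by simp
  have "sum (\<lambda>i. i) {1..k} < sum \<tau> {1..k}"
    by (rule sum_strict_mono_ex1) (use ge i0 lt in auto)
  moreover have "sum \<tau> {1..k} = sum (\<lambda>i. i) {1..k}"
    using sum.permute[OF assms(1), of "\<lambda>i. i"] by (simp add: comp_def)
  ultimately show False by simp
qed

definition Pw :: "'a::field \<Rightarrow> nat \<Rightarrow> (nat \<Rightarrow> 'a) \<Rightarrow> 'a" where
  "Pw q k w = (\<Prod>(a, b)\<in>{(a, b). a \<in> {1..k} \<and> b \<in> {1..k} \<and> a < b}. (w b - q * w a) / (w b - w a))"

lemma base_Z:
  fixes q :: "'a::field" and w :: "nat \<Rightarrow> 'a"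
  assumes tau: "\<tau> permutes {1..k}"
    and w0: "\<forall>i\<in>{1..k}. w i \<noteq> 0"
    and winj: "\<forall>a\<in>{1..k}. \<forall>b\<in>{1..k}. a \<noteq> b \<longrightarrow> w a \<noteq> w b"
    and wq: "\<forall>a\<in>{1..k}. \<forall>b\<in>{1..k}. w a \<noteq> q * w b"
  shows "Pw q k w * Zpf q k id \<tau> w = (if \<tau> = id then 1 else 0)"
proof (cases "k = 0")
  case True
  then have "\<tau> = id" using tau by simp
  then show ?thesis using True by (simp add: Pw_def Zpf_def)
next
  case False
  then have k1: "1 \<le> k" by simp
  let ?F = "\<lambda>i. (\<Prod>c\<in>{1..<i}. Rw q (w (\<tau> i) / w c) c i c i) * Rw q (w (\<tau> i) / w i) 0 i i 0"
  have Z: "Zpf q k id \<tau> w = (\<Prod>i\<in>{1..k}. ?F i)"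
  proof -
    have "Zpf q k id \<tau> w = latN q k k w (\<lambda>r. w (\<tau> r)) id (\<lambda>c. c) (\<lambda>_. 0) (Suc 0) (k - 0)"
      using Zpf_lat[OF k1] by simp
    also have "\<dots> = (if \<forall>c\<in>{1..k}. (0::nat) = Sst 0 c then (\<Prod>i\<in>{Suc 0..k}. ?F i) else 0)"
      by (rule lat_id) auto
    also have "\<dots> = (\<Prod>i\<in>{1..k}. ?F i)" by (simp add: Sst_def)
    finally show ?thesis .
  qed
  show ?thesis
  proof (cases "\<tau> = id")
    case True
    have q1: "q \<noteq> 1"
    proof
      assume "q = 1"
      moreover have "w 1 \<noteq> q * w 1"
      proof -
        have "(1::nat) \<in> {1..k}" using k1 by simp
        then show ?thesis using wq by blast
      qed
      ultimately show False by simp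
    qed
    have F: "?F i = (\<Prod>c\<in>{1..<i}. (w i - w c) / (w i - q * w c))" if i: "i \<in> {1..k}" for i
    proof -
      have "Rw q (w i / w i) 0 i i 0 = 1" using i w0 q1 by (auto simp: Rw_def)
      moreover have "Rw q (w i / w c) c i c i = (w i - w c) / (w i - q * w c)" if "c \<in> {1..<i}" for c
      proof -
        have "w c \<noteq> 0" using that i w0 by auto
        moreover have "w i / w c - q \<noteq> 0" using that i wq \<open>w c \<noteq> 0\<close> by (auto simp: field_simps)
        ultimately show ?thesis using that by (auto simp: Rw_def field_simps)
      qed
      ultimately show ?thesis using True by simp
    qed
    have "Pw q k w * Zpf q k id \<tau> w = Pw q k w * (\<Prod>i\<in>{1..k}. \<Prod>c\<in>{1..<i}. (w i - w c) / (w i - q * w c))"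
    proof -
      have "(\<Prod>i\<in>{1..k}. ?F i) = (\<Prod>i\<in>{1..k}. \<Prod>c\<in>{1..<i}. (w i - w c) / (w i - q * w c))"
        by (rule prod.cong[OF refl]) (rule F)
      then show ?thesis unfolding Z by simp
    qed
    also have "\<dots> = (\<Prod>(a, b)\<in>{(a, b). a \<in> {1..k} \<and> b \<in> {1..k} \<and> a < b}. (w b - q * w a) / (w b - w a) * ((w b - w a) / (w b - q * w a)))"
      unfolding Pw_def prod_pairs[where k = k and h = "\<lambda>c i. (w i - w c) / (w i - q * w c)"] prod.distrib[symmetric]
      by (simp add: case_prod_beta)
    also have "\<dots> = 1"
    proof (rule prod.neutral, clarify)
      fix a b assume ab: "a \<in> {1..k}" "b \<in> {1..k}" "a < b"
      have "w b - w a \<noteq> 0" using winj ab by auto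
      moreover have "w b - q * w a \<noteq> 0" using wq ab by auto
      ultimately show "(w b - q * w a) / (w b - w a) * ((w b - w a) / (w b - q * w a)) = 1" by simp
    qed
    finally show ?thesis using True by simp
  next
    case False
    obtain i where i: "i \<in> {1..k}" "\<tau> i < i" using perm_below[OF tau False] by blast
    have ti: "\<tau> i \<in> {1..<i}" using i permutes_in_image[OF tau, of i] by auto
    have R0: "Rw q (w (\<tau> i) / w (\<tau> i)) (\<tau> i) i (\<tau> i) i = 0"
      using ti w0 permutes_in_image[OF tau, of i] i by (auto simp: Rw_def)
    have "(\<Prod>c\<in>{1..<i}. Rw q (w (\<tau> i) / w c) c i c i) = 0"
    proof (rule prod_zero)
      show "\<exists>c\<in>{1..<i}. Rw q (w (\<tau> i) / w c) c i c i = 0" using ti R0 by blast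
    qed simp
    then have "?F i = 0" by simp
    then have "(\<Prod>i\<in>{1..k}. ?F i) = 0"
    proof (intro prod_zero)
      show "\<exists>j\<in>{1..k}. ?F j = 0" using i \<open>?F i = 0\<close> by blast
    qed simp
    then show ?thesis using False Z by simp
  qed
qed

lemma sgn_eq: "(-1::'a::field) powi (int m - int n) = (-1) ^ (m + n)"
proof -
  have "(-1::'a) powi (int m - int n) = (if even (int m - int n) then 1 else -1)"
    by (simp add: power_int_minus_left)
  moreover have "even (int m - int n) \<longleftrightarrow> even (m + n)"
    by (simp add: even_diff)
  ultimately show ?thesis by (simp add: minus_one_power_iff)
qed

lemma ring_aux: "S * P * Z2 * (A * C) + (- S) * P * (B * Zp + A * Z2) * C = (- S) * P * Zp * (B * C)" for S P Z2 A C B Zp :: "'a::comm_ring_1"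
  by (simp add: algebra_simps)

lemma alg:
  fixes q x y S P Z2 Zp :: "'a::field"
  assumes "x \<noteq> 0" "y \<noteq> 0" "x \<noteq> y" "x \<noteq> q * y" "y \<noteq> q * x"
  shows "S * P * Z2 * (q - (y - q * x) / (y - x)) + (- S) * P * ((x / y - 1) / (x / y - q) * Zp + (1 - q) / (x / y - q) * Z2) * ((x - q * y) / (x - y)) = (- S) * P * Zp"
proof -
  have e1: "(x / y - 1) / (x / y - q) = (x - y) / (x - q * y)" using assms by (simp add: field_simps)
  have e2: "(1 - q) / (x / y - q) = (1 - q) * y / (x - q * y)" using assms by (simp add: field_simps)
  have d1: "x - q * y \<noteq> 0" "x - y \<noteq> 0" "y - x \<noteq> 0" using assms by auto
  let ?A = "(1 - q) * y / (x - q * y)" and ?B = "(x - y) / (x - q * y)" and ?C = "(x - q * y) / (x - y)"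
  have f1: "q - (y - q * x) / (y - x) = ?A * ?C"
  proof -
    have "q - (y - q * x) / (y - x) = (q - 1) * y / (y - x)" using d1 by (simp add: field_simps)
    also have "\<dots> = (1 - q) * y / (x - y)" using d1 by (simp add: field_simps)
    also have "\<dots> = ?A * ?C" using d1 by simp
    finally show ?thesis .
  qed
  have f2: "?B * ?C = 1" using d1 by simp
  have "S * P * Z2 * (q - (y - q * x) / (y - x)) + (- S) * P * (?B * Zp + ?A * Z2) * ?C = S * P * Z2 * (?A * ?C) + (- S) * P * (?B * Zp + ?A * Z2) * ?C"
    unfolding f1 ..
  also have "\<dots> = (- S) * P * Zp * (?B * ?C)" by (rule ring_aux)
  also have "\<dots> = (- S) * P * Zp" unfolding f2 by simp
  finally show ?thesis unfolding e1 e2 .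
qed


lemma div_sub_q: "b \<noteq> 0 \<Longrightarrow> a \<noteq> q * b \<Longrightarrow> a / b - q \<noteq> (0::'a::field)"
  by (simp add: field_simps)

lemma Z_rec:
  fixes q :: "'a::field" and w :: "nat \<Rightarrow> 'a"
  assumes w0: "\<forall>i\<in>{1..k}. w i \<noteq> 0" and wq: "\<forall>a\<in>{1..k}. \<forall>b\<in>{1..k}. w a \<noteq> q * w b"
    and tau: "\<tau> permutes {1..k}" and p2: "p2 permutes {1..k}" and j: "1 \<le> j" "j < k"
  shows "Zpf q k p2 (\<tau> \<circ> sigma j) w =
    Rw q (w (\<tau> j) / w (\<tau> (Suc j))) (p2 j) (p2 (Suc j)) (p2 j) (p2 (Suc j)) * Zpf q k (p2 \<circ> sigma j) \<tau> w
  + (if p2 j \<noteq> p2 (Suc j) then Rw q (w (\<tau> j) / w (\<tau> (Suc j))) (p2 j) (p2 (Suc j)) (p2 (Suc j)) (p2 j) * Zpf q k p2 \<tau> w else 0)"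
proof -
  have k1: "1 \<le> k" using j by simp
  let ?X = "\<lambda>r. w (\<tau> r)"
  let ?z = "w (\<tau> j) / w (\<tau> (Suc j))"
  let ?L = "\<lambda>P. latN q k k w ?X P (\<lambda>c. c) (\<lambda>_. 0) 1 k"
  have inr: "\<tau> i \<in> {1..k}" if "i \<in> {1..k}" for i using permutes_in_image[OF tau] that by simp
  have inr2: "p2 i \<in> {1..k}" if "i \<in> {1..k}" for i using permutes_in_image[OF p2] that by simp
  have jr: "j \<in> {1..k}" "Suc j \<in> {1..k}" using j by auto
  have "Zpf q k p2 (\<tau> \<circ> sigma j) w = latN q k k w (\<lambda>i. ?X (sigma j i)) p2 (\<lambda>c. c) (\<lambda>_. 0) 1 k"
    using Zpf_lat[OF k1, of q p2 "\<tau> \<circ> sigma j" w] by (simp add: comp_def)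
  also have "\<dots> = (\<Sum>c'\<in>{0..k}. \<Sum>d\<in>{0..k}. Rw q ?z (p2 j) (p2 (Suc j)) c' d * ?L (p2(j := d, Suc j := c')))"
  proof (rule lat_train)
    show "1 \<le> j" "Suc j < 1 + k" using j by auto
    show "?X (Suc j) \<noteq> 0" using w0 inr[OF jr(2)] by blast
    show "?X j / ?X (Suc j) - q \<noteq> 0"
      using w0 wq inr[OF jr(1)] inr[OF jr(2)] by (intro div_sub_q) blast+
    fix c assume c: "1 \<le> c" "c \<le> k"
    then have cr: "c \<in> {1..k}" by simp
    show "w c \<noteq> 0 \<and> ?X j / w c - q \<noteq> 0 \<and> ?X (Suc j) / w c - q \<noteq> 0"
    proof (intro conjI div_sub_q)
      show wc: "w c \<noteq> 0" using w0 cr by blast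
      show "w c \<noteq> 0" by (rule wc)
      show "w c \<noteq> 0" by (rule wc)
      show "?X j \<noteq> q * w c" using wq inr[OF jr(1)] cr by blast
      show "?X (Suc j) \<noteq> q * w c" using wq inr[OF jr(2)] cr by blast
    qed
  next
    show "p2 j \<le> k" "p2 (Suc j) \<le> k" using inr2[OF jr(1)] inr2[OF jr(2)] by auto
  qed simp
  also have "\<dots> = Rw q ?z (p2 j) (p2 (Suc j)) (p2 j) (p2 (Suc j)) * ?L (p2(j := p2 (Suc j), Suc j := p2 j))
      + (if p2 j \<noteq> p2 (Suc j) then Rw q ?z (p2 j) (p2 (Suc j)) (p2 (Suc j)) (p2 j) * ?L (p2(j := p2 j, Suc j := p2 (Suc j))) else 0)"
    using inr2[OF jr(1)] inr2[OF jr(2)] by (intro sum_out2) auto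
  also have "p2(j := p2 (Suc j), Suc j := p2 j) = p2 \<circ> sigma j"
    by (auto simp: fun_eq_iff sigma_def transpose_def)
  also have "p2(j := p2 j, Suc j := p2 (Suc j)) = p2" by simp
  also have "?L (p2 \<circ> sigma j) = Zpf q k (p2 \<circ> sigma j) \<tau> w" by (rule Zpf_lat[OF k1, symmetric])
  also have "?L p2 = Zpf q k p2 \<tau> w" by (rule Zpf_lat[OF k1, symmetric])
  finally show ?thesis .
qed

lemma main_ind:
  fixes q :: "'a::field" and w :: "nat \<Rightarrow> 'a"
  assumes w0: "\<forall>i\<in>{1..k}. w i \<noteq> 0"
    and winj: "\<forall>a\<in>{1..k}. \<forall>b\<in>{1..k}. a \<noteq> b \<longrightarrow> w a \<noteq> w b"
    and wq: "\<forall>a\<in>{1..k}. \<forall>b\<in>{1..k}. w a \<noteq> q * w b"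
  shows "reduced_word k p ws \<Longrightarrow> \<tau> permutes {1..k} \<Longrightarrow>
    T_word q k ws \<tau> w = (-1) powi (int (perm_length k p) - int (perm_length k \<tau>)) * Pw q k w * Zpf q k p \<tau> w"
proof (induction ws arbitrary: p \<tau> rule: rev_induct)
  case Nil
  have p: "p = id" using Nil.prems(1) by (simp add: reduced_word_alt fw_def)
  have T: "T_word q k [] \<tau> w = (if \<tau> = id then 1 else 0)" by (simp add: T_word_def op_one_def)
  have B: "Pw q k w * Zpf q k id \<tau> w = (if \<tau> = id then 1 else 0)" by (rule base_Z[OF Nil.prems(2) w0 winj wq])
  show ?case
  proof (cases "\<tau> = id")
    case True
    have e1: "T_word q k [] \<tau> w = 1" using T True by (simp only: simp_thms if_True)
    have e2: "Pw q k w * Zpf q k p \<tau> w = 1" using B p True by (simp only: simp_thms if_True)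
    have l0: "perm_length k p = 0" "perm_length k \<tau> = 0" using p True by (simp_all only: perm_length_id)
    show ?thesis unfolding e1 mult.assoc e2 l0 by simp
  next
    case False
    have e1: "T_word q k [] \<tau> w = 0" using T False by (simp only: if_False)
    have e2: "Pw q k w * Zpf q k p \<tau> w = 0" using B p False by (simp only: if_False)
    show ?thesis unfolding e1 mult.assoc e2 by simp
  qed
next
  case (snoc j ws)
  define p2 where "p2 = p \<circ> sigma j"
  note rs = reduced_snoc[OF snoc.prems(1), folded p2_def]
  have j: "1 \<le> j" "j < k" using rs by auto
  have tau: "\<tau> permutes {1..k}" by (rule snoc.prems(2))
  have tau2: "\<tau> \<circ> sigma j permutes {1..k}" using permutes_compose[OF sigma_permutes[OF j] tau] .
  have p2perm: "p2 permutes {1..k}" using fw_permutes[of ws k] rs(1) by (simp add: reduced_word_alt)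
  have pp: "p2 \<circ> sigma j = p" using rs(2) by simp
  let ?x = "w (\<tau> j)" and ?y = "w (\<tau> (Suc j))"
  let ?a = "p2 j" and ?b = "p2 (Suc j)"
  have jr: "j \<in> {1..k}" "Suc j \<in> {1..k}" using j by auto
  have tj: "\<tau> j \<in> {1..k}" "\<tau> (Suc j) \<in> {1..k}" using permutes_in_image[OF tau] jr by auto
  have tne: "\<tau> j \<noteq> \<tau> (Suc j)" using permutes_inj[OF tau] by (metis injD n_not_Suc_n)
  have x0: "?x \<noteq> 0" and y0: "?y \<noteq> 0" using w0 tj by auto
  have xy: "?x \<noteq> ?y" using winj tj tne by blast
  have xqy: "?x \<noteq> q * ?y" and yqx: "?y \<noteq> q * ?x" using wq tj by auto
  have ab: "?a < ?b" using rs(4) by simp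
  define S where "S = ((-1::'a) ^ (perm_length k p2 + perm_length k \<tau>))"
  have IH1: "T_word q k ws \<tau> w = S * Pw q k w * Zpf q k p2 \<tau> w"
    using snoc.IH[OF rs(1) tau] unfolding S_def sgn_eq .
  have s2: "(-1::'a) ^ (perm_length k p2 + perm_length k (\<tau> \<circ> sigma j)) = - S"
  proof -
    from len_step[OF tau j] consider (A) "perm_length k (\<tau> \<circ> sigma j) = Suc (perm_length k \<tau>)"
      | (B) "perm_length k \<tau> = Suc (perm_length k (\<tau> \<circ> sigma j))" by linarith
    then show ?thesis
    proof cases
      case A then show ?thesis unfolding S_def by simp
    next
      case B then show ?thesis unfolding S_def by simp
    qed
  qed
  have IH2: "T_word q k ws (\<tau> \<circ> sigma j) w = (- S) * Pw q k w * Zpf q k p2 (\<tau> \<circ> sigma j) w"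
    using snoc.IH[OF rs(1) tau2] unfolding sgn_eq s2 .
  have s3: "(-1::'a) ^ (perm_length k p + perm_length k \<tau>) = - S"
    using rs(3) unfolding S_def by simp
  have Zr: "Zpf q k p2 (\<tau> \<circ> sigma j) w = (?x / ?y - 1) / (?x / ?y - q) * Zpf q k p \<tau> w + (1 - q) / (?x / ?y - q) * Zpf q k p2 \<tau> w"
  proof -
    have "Zpf q k p2 (\<tau> \<circ> sigma j) w = Rw q (?x / ?y) ?a ?b ?a ?b * Zpf q k (p2 \<circ> sigma j) \<tau> w
      + (if ?a \<noteq> ?b then Rw q (?x / ?y) ?a ?b ?b ?a * Zpf q k p2 \<tau> w else 0)"
      by (rule Z_rec[OF w0 wq tau p2perm j])
    moreover have "Rw q (?x / ?y) ?a ?b ?a ?b = (?x / ?y - 1) / (?x / ?y - q)" using ab by (simp add: Rw_def)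
    moreover have "Rw q (?x / ?y) ?a ?b ?b ?a = (1 - q) / (?x / ?y - q)" using ab by (simp add: Rw_def)
    ultimately show ?thesis using ab pp by simp
  qed
  have "T_word q k (ws @ [j]) \<tau> w =
    T_word q k ws \<tau> w * (q - (?y - q * ?x) / (?y - ?x))
  + T_word q k ws (\<tau> \<circ> sigma j) w * ((?x - q * ?y) / (?x - ?y))"
    using T_word_snoc_eval[OF tau j, of q ws w] by (simp add: sigma_simps)
  also have "\<dots> = S * Pw q k w * Zpf q k p2 \<tau> w * (q - (?y - q * ?x) / (?y - ?x))
     + (- S) * Pw q k w * ((?x / ?y - 1) / (?x / ?y - q) * Zpf q k p \<tau> w + (1 - q) / (?x / ?y - q) * Zpf q k p2 \<tau> w) * ((?x - q * ?y) / (?x - ?y))"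
    unfolding IH1 IH2 Zr ..
  also have "\<dots> = (- S) * Pw q k w * Zpf q k p \<tau> w"
    by (rule alg[OF x0 y0 xy xqy yqx])
  also have "\<dots> = (-1) powi (int (perm_length k p) - int (perm_length k \<tau>)) * Pw q k w * Zpf q k p \<tau> w"
    unfolding sgn_eq s3 ..
  finally show ?case .
qed

theorem proposition3p2:
  fixes q :: "'a::field" and k :: nat and p rho :: "nat \<Rightarrow> nat" and w :: "nat \<Rightarrow> 'a"
  assumes "p permutes {1..k}" and "rho permutes {1..k}"
    and "\<forall>i\<in>{1..k}. w i \<noteq> 0"
    and "\<forall>a\<in>{1..k}. \<forall>b\<in>{1..k}. a \<noteq> b \<longrightarrow> w a \<noteq> w b"
    and "\<forall>a\<in>{1..k}. \<forall>b\<in>{1..k}. w a \<noteq> q * w b"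
  shows "kappa q k p rho w =
    (-1) powi (int (perm_length k p) - int (perm_length k rho))
    * (\<Prod>(a, b)\<in>{(a, b). a \<in> {1..k} \<and> b \<in> {1..k} \<and> a < b}. (w b - q * w a) / (w b - w a))
    * Zpf q k p rho w"
proof -
  have "\<exists>ws. reduced_word k p ws" by (rule ex_reduced[OF assms(1)])
  then have rw: "reduced_word k p (SOME ws. reduced_word k p ws)" by (rule someI_ex)
  have "kappa q k p rho w = T_word q k (SOME ws. reduced_word k p ws) rho w"
    unfolding kappa_def T_perm_def ..
  also have "\<dots> = (-1) powi (int (perm_length k p) - int (perm_length k rho)) * Pw q k w * Zpf q k p rho w"
    by (rule main_ind[OF assms(3,4,5) rw assms(2)])
  finally show ?thesis unfolding Pw_def .
qed

end
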